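(* Let $E$ be a Hausdorff topological vector space over $\mathbb{R}$ and let $A$ be a topologically independent subset of (the additive topological group of) $E$. Then $\langle A\rangle$ is the Tychonoff direct sum $\bigoplus_{a\in A}\langle a\rangle$ if and only if the topology of the linear span $\langle A\rangle_{\mathbb{R}}$ (with the subspace topology from $E$) is weak.
   Context: $\langle A\rangle$ is the additive subgroup generated by $A$ and $\langle A\rangle_{\mathbb{R}}$ its real linear span, both with subspace topology. A subset $A$ of an abelian topological group $G$ (neutral element $0$) is topologically independent if $0\notin A$ and for every neighborhood $W$ of $0$ there is a neighborhood $U$ of $0$ such that for every finite $F\subseteq A$ and every family of integers $\{z_a: a\in F\}$, the condition $\sum_{a\in F}z_a a\in U$ implies $z_a a\in W$ for all $a\in F$. The Tychonoff direct sum $\bigoplus_{a\in A}\langle a\rangle$ is the direct sum of the groups $\langle a\rangle$ (subspace topology) with the topology induced from the product $\prod_{a\in A}\langle a\rangle$; "$\langle A\rangle$ is the Tychonoff direct sum" means the map $(g_a)\mapsto\sum_a g_a$ is an isomorphism of topological groups from $\bigoplus_{a\in A}\langle a\rangle$ onto $\langle A\rangle$. The topology of a topological vector space $X$ is weak if it coincides with the coarsest topology making all continuous linear functionals on $X$ continuous. *)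

theory Defs
  imports "HOL-Analysis.Analysis"
begin

definition tvs_ops_continuous :: "('a::{real_vector,topological_space}) itself \<Rightarrow> bool" where
  "tvs_ops_continuous _ \<longleftrightarrow>
     continuous_on UNIV (\<lambda>p::'a \<times> 'a. fst p + snd p) \<and>
     continuous_on UNIV (\<lambda>p::real \<times> 'a. fst p *\<^sub>R snd p)"

definition zspan :: "'a::real_vector set \<Rightarrow> 'a set" where
  "zspan A = {(\<Sum>a\<in>F. of_int (z a) *\<^sub>R a) | F z. finite F \<and> F \<subseteq> A}"

definition top_independent :: "'a::{real_vector,topological_space} set \<Rightarrow> bool" where
  "top_independent A \<longleftrightarrow> 0 \<notin> A \<and>
     (\<forall>W. open W \<and> 0 \<in> W \<longrightarrow>
        (\<exists>U. open U \<and> 0 \<in> U \<and>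
           (\<forall>F (z::'a \<Rightarrow> int). finite F \<and> F \<subseteq> A \<and> (\<Sum>a\<in>F. of_int (z a) *\<^sub>R a) \<in> U
               \<longrightarrow> (\<forall>a\<in>F. of_int (z a) *\<^sub>R a \<in> W))))"

text \<open>Underlying set of the direct sum: finitely supported elements of the product of the
  cyclic groups (with Isabelle's extensional convention for \<open>PiE\<close>).\<close>
definition dsum_carrier :: "'a::real_vector set \<Rightarrow> ('a \<Rightarrow> 'a) set" where
  "dsum_carrier A = {g \<in> (\<Pi>\<^sub>E a\<in>A. zspan {a}). finite {a\<in>A. g a \<noteq> 0}}"

definition tychonoff_dsum :: "'a::{real_vector,topological_space} set \<Rightarrow> ('a \<Rightarrow> 'a) topology" where
  "tychonoff_dsum A =
     subtopology (product_topology (\<lambda>a. subtopology euclidean (zspan {a})) A) (dsum_carrier A)"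

definition dsum_map :: "'a::real_vector set \<Rightarrow> ('a \<Rightarrow> 'a) \<Rightarrow> 'a" where
  "dsum_map A g = (\<Sum>a\<in>{a\<in>A. g a \<noteq> 0}. g a)"

text \<open>\<open>\<langle>A\<rangle>\<close> is the Tychonoff direct sum: the summation map is an isomorphism of
  topological groups (it is always an additive homomorphism; we require it to be a homeomorphism,
  which includes bijectivity).\<close>
definition is_tychonoff_dsum :: "'a::{real_vector,topological_space} set \<Rightarrow> bool" where
  "is_tychonoff_dsum A \<longleftrightarrow>
     homeomorphic_map (tychonoff_dsum A) (subtopology euclidean (zspan A)) (dsum_map A)"

definition linear_on :: "'a::real_vector set \<Rightarrow> ('a \<Rightarrow> real) \<Rightarrow> bool" where
  "linear_on X f \<longleftrightarrow> (\<forall>x\<in>X. \<forall>y\<in>X. f (x + y) = f x + f y) \<and> (\<forall>c. \<forall>x\<in>X. f (c *\<^sub>R x) = c * f x)"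

definition cont_lin_functionals :: "'a::{real_vector,topological_space} set \<Rightarrow> ('a \<Rightarrow> real) set" where
  "cont_lin_functionals X = {f. linear_on X f \<and> continuous_map (subtopology euclidean X) euclideanreal f}"

definition weak_topology_on :: "'a::{real_vector,topological_space} set \<Rightarrow> bool" where
  "weak_topology_on X \<longleftrightarrow>
     subtopology euclidean X =
     topology_generated_by {X \<inter> f -` V | f V. f \<in> cont_lin_functionals X \<and> open V}"

end

theory Submission
  imports Defs
begin


context
  assumes tvs: "tvs_ops_continuous TYPE('a::{real_vector,t2_space})"
begin

lemma tvs_cont_add:
  fixes f g :: "'b::topological_space \<Rightarrow> 'a"
  assumes "continuous_on UNIV f" "continuous_on UNIV g"
  shows "continuous_on UNIV (\<lambda>x. f x + g x)"
proof -
  have c: "continuous_on UNIV (\<lambda>p::'a \<times> 'a. fst p + snd p)"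
    using tvs unfolding tvs_ops_continuous_def by blast
  have "continuous_on UNIV ((\<lambda>p::'a \<times> 'a. fst p + snd p) \<circ> (\<lambda>x. (f x, g x)))"
    by (rule continuous_on_compose[OF continuous_on_Pair[OF assms]]) (rule continuous_on_subset[OF c], simp)
  then show ?thesis by (simp add: o_def)
qed

lemma tvs_cont_scale:
  fixes f :: "'b::topological_space \<Rightarrow> 'a" and c :: "'b \<Rightarrow> real"
  assumes "continuous_on UNIV c" "continuous_on UNIV f"
  shows "continuous_on UNIV (\<lambda>x. c x *\<^sub>R f x)"
proof -
  have cc: "continuous_on UNIV (\<lambda>p::real \<times> 'a. fst p *\<^sub>R snd p)"
    using tvs unfolding tvs_ops_continuous_def by blast
  have "continuous_on UNIV ((\<lambda>p::real \<times> 'a. fst p *\<^sub>R snd p) \<circ> (\<lambda>x. (c x, f x)))"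
    by (rule continuous_on_compose[OF continuous_on_Pair[OF assms]]) (rule continuous_on_subset[OF cc], simp)
  then show ?thesis by (simp add: o_def)
qed

lemma tvs_open_vimage:
  fixes h :: "'b::topological_space \<Rightarrow> 'c::topological_space"
  assumes "open S" "continuous_on UNIV h"
  shows "open (h -` S)"
  using continuous_on_open_vimage[OF open_UNIV, of h] assms by auto

lemma tvs_open_affine:
  fixes S :: "'a set"
  assumes "open S"
  shows "open ((\<lambda>y. c *\<^sub>R y + d) -` S)"
proof -
  have "continuous_on UNIV (\<lambda>y::'a. c *\<^sub>R y + d)"
    by (intro tvs_cont_add tvs_cont_scale continuous_on_const continuous_on_id)
  then show ?thesis using tvs_open_vimage[OF assms] by blast
qed

lemma tvs_open_transl:
  fixes S :: "'a set"
  assumes "open S"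
  shows "open ((\<lambda>y. y + d) -` S)"
  using tvs_open_affine[OF assms, of 1 d] by simp

lemma tvs_half:
  fixes W :: "'a set"
  assumes "open W" "0 \<in> W"
  shows "\<exists>N. open N \<and> 0 \<in> N \<and> (\<forall>x\<in>N. \<forall>y\<in>N. x + y \<in> W)"
proof -
  have c: "continuous_on UNIV (\<lambda>p::'a \<times> 'a. fst p + snd p)"
    using tvs unfolding tvs_ops_continuous_def by blast
  have o: "open ((\<lambda>p::'a \<times> 'a. fst p + snd p) -` W)"
    by (rule tvs_open_vimage[OF assms(1) c])
  have h0: "(0,0) \<in> (\<lambda>p::'a \<times> 'a. fst p + snd p) -` W" using assms by simp
  obtain A B where AB: "open A" "open B" "(0,0) \<in> A \<times> B" "A \<times> B \<subseteq> (\<lambda>p::'a \<times> 'a. fst p + snd p) -` W"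
    using bspec[OF o[unfolded open_prod_def] h0] by blast
  show ?thesis
  proof (intro exI[of _ "A \<inter> B"] conjI ballI)
    show "open (A \<inter> B)" using AB(1,2) by auto
    show "0 \<in> A \<inter> B" using AB(3) by auto
    fix x y assume "x \<in> A \<inter> B" "y \<in> A \<inter> B"
    then have "(x, y) \<in> A \<times> B" by auto
    with AB(4) have "(x, y) \<in> (\<lambda>p::'a \<times> 'a. fst p + snd p) -` W" by (rule subsetD)
    then show "x + y \<in> W" by simp
  qed
qed

lemma tvs_scal:
  fixes W :: "'a set"
  assumes "open W" "0 \<in> W"
  shows "\<exists>d>0. \<exists>N. open N \<and> 0 \<in> N \<and> (\<forall>t x. \<bar>t\<bar> < d \<longrightarrow> x \<in> N \<longrightarrow> t *\<^sub>R x \<in> W)"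
proof -
  have c: "continuous_on UNIV (\<lambda>p::real \<times> 'a. fst p *\<^sub>R snd p)"
    using tvs unfolding tvs_ops_continuous_def by blast
  have o: "open ((\<lambda>p::real \<times> 'a. fst p *\<^sub>R snd p) -` W)"
    by (rule tvs_open_vimage[OF assms(1) c])
  have h0: "(0,0) \<in> (\<lambda>p::real \<times> 'a. fst p *\<^sub>R snd p) -` W" using assms by simp
  obtain A B where AB: "open A" "open B" "(0,0) \<in> A \<times> B" "A \<times> B \<subseteq> (\<lambda>p::real \<times> 'a. fst p *\<^sub>R snd p) -` W"
    using bspec[OF o[unfolded open_prod_def] h0] by blast
  have "0 \<in> A" using AB(3) by simp
  then obtain e where e: "e > 0" "ball 0 e \<subseteq> A" using AB(1) openE by blast
  show ?thesis
  proof (intro exI conjI allI impI)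
    show "e > 0" by fact
    show "open B" "0 \<in> B" using AB(2,3) by auto
    fix t x assume "\<bar>t\<bar> < e" "x \<in> B"
    then have "(t, x) \<in> A \<times> B" using e by auto
    with AB(4) have "(t, x) \<in> (\<lambda>p::real \<times> 'a. fst p *\<^sub>R snd p) -` W" by (rule subsetD)
    then show "t *\<^sub>R x \<in> W" by simp
  qed
qed

lemma tvs_ptwise:
  fixes W :: "'a set"
  assumes "open W" "0 \<in> W"
  shows "\<exists>d>0. \<forall>t. \<bar>t\<bar> < d \<longrightarrow> t *\<^sub>R x \<in> W"
proof -
  have "continuous_on UNIV (\<lambda>t::real. t *\<^sub>R x)"
    by (intro tvs_cont_scale continuous_on_const continuous_on_id)
  then have o: "open ((\<lambda>t::real. t *\<^sub>R x) -` W)" by (rule tvs_open_vimage[OF assms(1)])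
  have "0 \<in> (\<lambda>t::real. t *\<^sub>R x) -` W" using assms by simp
  then obtain e where e: "e > 0" "ball 0 e \<subseteq> (\<lambda>t::real. t *\<^sub>R x) -` W"
    using o by (meson openE)
  show ?thesis
  proof (intro exI[of _ e] conjI allI impI)
    show "e > 0" by fact
    fix t :: real assume "\<bar>t\<bar> < e"
    then have "t \<in> ball 0 e" by (simp add: dist_real_def)
    then show "t *\<^sub>R x \<in> W" using e(2) by blast
  qed
qed

lemma tvs_fin_comb:
  fixes W :: "'a set" and G :: "'a set"
  assumes "finite G" "open W" "0 \<in> W"
  shows "\<exists>d>0. \<forall>r. (\<forall>b\<in>G. \<bar>r b\<bar> < d) \<longrightarrow> (\<Sum>b\<in>G. r b *\<^sub>R b) \<in> W"
  using assms
proof (induction G arbitrary: W rule: finite_induct)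
  case empty
  then show ?case by (intro exI[of _ 1]) auto
next
  case (insert b G)
  obtain N where N: "open N" "0 \<in> N" "\<forall>x\<in>N. \<forall>y\<in>N. x + y \<in> W"
    using tvs_half[OF insert.prems] by blast
  obtain d1 where d1: "d1 > 0" "\<forall>r. (\<forall>b\<in>G. \<bar>r b\<bar> < d1) \<longrightarrow> (\<Sum>b\<in>G. r b *\<^sub>R b) \<in> N"
    using insert.IH[OF N(1,2)] by blast
  obtain d2 where d2: "d2 > 0" "\<forall>t. \<bar>t\<bar> < d2 \<longrightarrow> t *\<^sub>R b \<in> N"
    using tvs_ptwise[OF N(1,2)] by blast
  show ?case
  proof (intro exI[of _ "min d1 d2"] conjI allI impI)
    show "min d1 d2 > 0" using d1 d2 by simp
    fix r assume r: "\<forall>c\<in>insert b G. \<bar>r c\<bar> < min d1 d2"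
    have "(\<Sum>c\<in>insert b G. r c *\<^sub>R c) = r b *\<^sub>R b + (\<Sum>c\<in>G. r c *\<^sub>R c)"
      using insert.hyps by simp
    moreover have "r b *\<^sub>R b \<in> N" using d2 r by auto
    moreover have "(\<Sum>c\<in>G. r c *\<^sub>R c) \<in> N" using d1 r by auto
    ultimately show "(\<Sum>c\<in>insert b G. r c *\<^sub>R c) \<in> W" using N(3) by metis
  qed
qed

end


lemma zspanI: "finite F \<Longrightarrow> F \<subseteq> A \<Longrightarrow> (\<Sum>b\<in>F. of_int (z b) *\<^sub>R b) \<in> zspan A"
  unfolding zspan_def by blast

lemma zspan_single: "zspan {a} = range (\<lambda>k::int. of_int k *\<^sub>R a)"
proof
  show "zspan {a} \<subseteq> range (\<lambda>k::int. of_int k *\<^sub>R a)"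
  proof
    fix x assume "x \<in> zspan {a}"
    then obtain F z where F: "x = (\<Sum>b\<in>F. of_int (z b) *\<^sub>R b)" "finite F" "F \<subseteq> {a}"
      unfolding zspan_def by blast
    show "x \<in> range (\<lambda>k::int. of_int k *\<^sub>R a)"
    proof (cases "F = {}")
      case True then show ?thesis using F by (auto intro: image_eqI[of _ _ 0])
    next
      case False then have "F = {a}" using F by auto
      then show ?thesis using F by auto
    qed
  qed
next
  show "range (\<lambda>k::int. of_int k *\<^sub>R a) \<subseteq> zspan {a}"
  proof
    fix x assume "x \<in> range (\<lambda>k::int. of_int k *\<^sub>R a)"
    then obtain k where k: "x = of_int k *\<^sub>R a" by blast
    have "(\<Sum>b\<in>{a}. of_int ((\<lambda>_. k) b) *\<^sub>R b) \<in> zspan {a}"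
      by (rule zspanI[of "{a}" "{a}" "\<lambda>_. k"]) auto
    then show "x \<in> zspan {a}" using k by simp
  qed
qed

lemma zspan_subset_span: "zspan A \<subseteq> span A"
proof
  fix x assume "x \<in> zspan A"
  then obtain F z where F: "x = (\<Sum>b\<in>F. of_int (z b) *\<^sub>R b)" "finite F" "F \<subseteq> A"
    unfolding zspan_def by blast
  show "x \<in> span A" unfolding F(1)
    by (intro span_sum span_scale) (use F in \<open>auto intro: span_base\<close>)
qed

lemma ti_0: "top_independent A \<Longrightarrow> 0 \<notin> A"
  unfolding top_independent_def by (rule conjunct1)

lemma ti_get:
  assumes "top_independent A" "open W" "0 \<in> W"
  shows "\<exists>U. open U \<and> 0 \<in> U \<and>
           (\<forall>F (z::'b::{real_vector,topological_space} \<Rightarrow> int). finite F \<and> F \<subseteq> A \<and> (\<Sum>a\<in>F. of_int (z a) *\<^sub>R a) \<in> U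
               \<longrightarrow> (\<forall>a\<in>F. of_int (z a) *\<^sub>R a \<in> W))"
proof -
  have "\<forall>W. open W \<and> 0 \<in> W \<longrightarrow>
        (\<exists>U. open U \<and> 0 \<in> U \<and>
           (\<forall>F (z::'b \<Rightarrow> int). finite F \<and> F \<subseteq> A \<and> (\<Sum>a\<in>F. of_int (z a) *\<^sub>R a) \<in> U
               \<longrightarrow> (\<forall>a\<in>F. of_int (z a) *\<^sub>R a \<in> W)))"
    using assms(1) unfolding top_independent_def by (rule conjunct2)
  then have "open W \<and> 0 \<in> W \<longrightarrow>
        (\<exists>U. open U \<and> 0 \<in> U \<and>
           (\<forall>F (z::'b \<Rightarrow> int). finite F \<and> F \<subseteq> A \<and> (\<Sum>a\<in>F. of_int (z a) *\<^sub>R a) \<in> U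
               \<longrightarrow> (\<forall>a\<in>F. of_int (z a) *\<^sub>R a \<in> W)))" by (rule spec)
  from this conjI[OF assms(2,3)] show ?thesis by (rule mp)
qed

context
  assumes tvs: "tvs_ops_continuous TYPE('a::{real_vector,t2_space})"
begin

lemma tvs_exclude:
  fixes a :: 'a
  assumes "a \<noteq> 0"
  shows "\<exists>W. open W \<and> 0 \<in> W \<and> (\<forall>k::int. of_int k *\<^sub>R a \<in> W \<longrightarrow> k = 0)"
proof -
  obtain W1 where W1: "open W1" "0 \<in> W1" "a \<notin> W1"
    using separation_t1[of "0::'a" a] assms by auto
  obtain d N where dN: "d > 0" "open N" "0 \<in> N" "\<forall>t x. \<bar>t\<bar> < d \<longrightarrow> x \<in> N \<longrightarrow> t *\<^sub>R x \<in> W1"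
    using tvs_scal[OF tvs W1(1,2)] by blast
  define W where "W = (\<lambda>y. (2/d) *\<^sub>R y + 0) -` N"
  have "open W" unfolding W_def by (rule tvs_open_affine[OF tvs dN(2)])
  moreover have "0 \<in> W" unfolding W_def using dN by simp
  moreover have "k = 0" if k: "of_int k *\<^sub>R a \<in> W" for k :: int
  proof (rule ccontr)
    assume k0: "k \<noteq> 0"
    have m: "(2/d) *\<^sub>R (of_int k *\<^sub>R a) \<in> N" using k unfolding W_def by simp
    have "\<bar>d / (2 * of_int k)\<bar> < d"
    proof -
      have "\<bar>of_int k :: real\<bar> \<ge> 1" using k0 by linarith
      then have "\<bar>d / (2 * of_int k)\<bar> = d / (2 * \<bar>of_int k\<bar>)" using dN(1) by (simp add: abs_mult)
      also have "\<dots> \<le> d / (2 * 1)"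
        by (rule divide_left_mono) (use \<open>\<bar>of_int k :: real\<bar> \<ge> 1\<close> dN(1) in auto)
      also have "\<dots> < d" using dN(1) by simp
      finally show ?thesis .
    qed
    then have "(d / (2 * of_int k)) *\<^sub>R ((2/d) *\<^sub>R (of_int k *\<^sub>R a)) \<in> W1" using dN(4) m by blast
    moreover have "(d / (2 * of_int k)) *\<^sub>R ((2/d) *\<^sub>R (of_int k *\<^sub>R a)) = a"
      using k0 dN(1) by (simp add: field_simps)
    ultimately show False using W1(3) by simp
  qed
  ultimately show ?thesis by blast
qed

lemma tvs_exclude_fin:
  fixes F :: "'a set"
  assumes "finite F" "0 \<notin> F"
  shows "\<exists>W. open W \<and> 0 \<in> W \<and> (\<forall>a\<in>F. \<forall>k::int. of_int k *\<^sub>R a \<in> W \<longrightarrow> k = 0)"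
  using assms
proof (induction F rule: finite_induct)
  case empty then show ?case by (intro exI[of _ UNIV]) auto
next
  case (insert b F)
  obtain W1 where W1: "open W1" "0 \<in> W1" "\<forall>a\<in>F. \<forall>k::int. of_int k *\<^sub>R a \<in> W1 \<longrightarrow> k = 0"
    using insert by auto
  obtain W2 where W2: "open W2" "0 \<in> W2" "\<forall>k::int. of_int k *\<^sub>R b \<in> W2 \<longrightarrow> k = 0"
    using tvs_exclude[of b] insert by auto
  show ?case
    by (rule exI[of _ "W1 \<inter> W2"]) (use W1 W2 in auto)
qed

lemma ti_Zindep:
  fixes A :: "'a set"
  assumes ti: "top_independent A" and F: "finite F" "F \<subseteq> A"
    and s: "(\<Sum>a\<in>F. of_int (z a) *\<^sub>R a) = 0"
  shows "\<forall>a\<in>F. z a = 0"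
proof
  fix a assume a: "a \<in> F"
  have a0: "a \<noteq> 0" using ti_0[OF ti] a F by auto
  show "z a = 0"
  proof (rule ccontr)
    assume "z a \<noteq> 0"
    then have "of_int (z a) *\<^sub>R a \<noteq> 0" using a0 by simp
    then obtain W where W: "open W" "0 \<in> W" "of_int (z a) *\<^sub>R a \<notin> W"
      using separation_t1[of "0::'a" "of_int (z a) *\<^sub>R a"] by auto
    obtain U where U: "open U" "0 \<in> U"
      "\<forall>F (z::'a \<Rightarrow> int). finite F \<and> F \<subseteq> A \<and> (\<Sum>a\<in>F. of_int (z a) *\<^sub>R a) \<in> U
               \<longrightarrow> (\<forall>a\<in>F. of_int (z a) *\<^sub>R a \<in> W)"
      using ti_get[OF ti W(1,2)] by (elim exE conjE) (intro that)
    have "finite F \<and> F \<subseteq> A \<and> (\<Sum>a\<in>F. of_int (z a) *\<^sub>R a) \<in> U" using F s U(2) by simp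
    then have "\<forall>a\<in>F. of_int (z a) *\<^sub>R a \<in> W" using U(3) by (rule_tac mp[OF spec[OF spec[OF U(3), of F], of z]])
    then show False using a W(3) by blast
  qed
qed

lemma ti_nbhd:
  fixes A :: "'a set"
  assumes ti: "top_independent A" and F: "finite F" "F \<subseteq> A"
  shows "\<exists>U. open U \<and> 0 \<in> U \<and> (\<forall>H (z::'a \<Rightarrow> int). finite H \<and> H \<subseteq> A \<and> (\<Sum>a\<in>H. of_int (z a) *\<^sub>R a) \<in> U
               \<longrightarrow> (\<forall>a\<in>H \<inter> F. z a = 0))"
proof -
  have "0 \<notin> F" using ti_0[OF ti] F by auto
  then obtain W where W: "open W" "0 \<in> W" "\<forall>a\<in>F. \<forall>k::int. of_int k *\<^sub>R a \<in> W \<longrightarrow> k = 0"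
    using tvs_exclude_fin[OF F(1) \<open>0 \<notin> F\<close>] by (elim exE conjE) (rule that)
  obtain U where U: "open U" "0 \<in> U"
      "\<forall>F (z::'a \<Rightarrow> int). finite F \<and> F \<subseteq> A \<and> (\<Sum>a\<in>F. of_int (z a) *\<^sub>R a) \<in> U
               \<longrightarrow> (\<forall>a\<in>F. of_int (z a) *\<^sub>R a \<in> W)"
    using ti_get[OF ti W(1,2)] by (elim exE conjE) (intro that)
  show ?thesis
  proof (intro exI[of _ U] conjI allI impI ballI)
    fix H and z :: "'a \<Rightarrow> int" and a
    assume H: "finite H \<and> H \<subseteq> A \<and> (\<Sum>a\<in>H. of_int (z a) *\<^sub>R a) \<in> U" and a: "a \<in> H \<inter> F"
    have "\<forall>a\<in>H. of_int (z a) *\<^sub>R a \<in> W" by (rule mp[OF spec[OF spec[OF U(3), of H], of z] H])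
    then have "of_int (z a) *\<^sub>R a \<in> W" using a by blast
    then show "z a = 0" using W(3) a by blast
  qed (use U(1,2) in auto)
qed

end


definition ZC :: "'a::{real_vector,topological_space} set \<Rightarrow> bool" where
  "ZC A \<longleftrightarrow> (\<forall>W. open W \<and> 0 \<in> W \<longrightarrow> (\<exists>F. finite F \<and> F \<subseteq> A \<and> zspan (A - F) \<subseteq> W))"

definition SC :: "'a::{real_vector,topological_space} set \<Rightarrow> bool" where
  "SC A \<longleftrightarrow> (\<forall>W. open W \<and> 0 \<in> W \<longrightarrow> (\<exists>F. finite F \<and> F \<subseteq> A \<and> span (A - F) \<subseteq> W))"

lemma topspace_tych: "topspace (tychonoff_dsum A) = dsum_carrier A"
  unfolding tychonoff_dsum_def dsum_carrier_def by auto

lemma dsum_eq: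
  assumes "finite T" "{a\<in>A. g a \<noteq> 0} \<subseteq> T" "T \<subseteq> A"
  shows "dsum_map A g = (\<Sum>a\<in>T. g a)"
  unfolding dsum_map_def
  by (rule sum.mono_neutral_left) (use assms in auto)

lemma zmult_in: "of_int k *\<^sub>R a \<in> zspan {a}"
  unfolding zspan_single by (rule rangeI)

lemma zero_in_zspan1: "0 \<in> zspan {a}"
  using zmult_in[of 0 a] by simp

lemma dsum_carrierI:
  assumes "finite G" "G \<subseteq> A"
  shows "(\<lambda>b. if b \<in> A then (if b \<in> G then of_int (m b) *\<^sub>R b else 0) else undefined) \<in> dsum_carrier A"
proof -
  have "{a\<in>A. (if a \<in> A then (if a \<in> G then of_int (m a) *\<^sub>R a else 0) else undefined) \<noteq> 0} \<subseteq> G"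
    by auto
  then have "finite {a\<in>A. (if a \<in> A then (if a \<in> G then of_int (m a) *\<^sub>R a else 0) else undefined) \<noteq> 0}"
    using assms(1) finite_subset by blast
  moreover have "(\<lambda>b. if b \<in> A then (if b \<in> G then of_int (m b) *\<^sub>R b else 0) else undefined) \<in> (\<Pi>\<^sub>E a\<in>A. zspan {a})"
    by (auto simp: zmult_in zero_in_zspan1)
  ultimately show ?thesis unfolding dsum_carrier_def by blast
qed

lemma dsum_map_I:
  assumes "finite G" "G \<subseteq> A"
  shows "dsum_map A (\<lambda>b. if b \<in> A then (if b \<in> G then of_int (m b) *\<^sub>R b else 0) else undefined)
         = (\<Sum>b\<in>G. of_int (m b) *\<^sub>R b)"
proof -
  have "dsum_map A (\<lambda>b. if b \<in> A then (if b \<in> G then of_int (m b) *\<^sub>R b else 0) else undefined)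
      = (\<Sum>a\<in>G. (\<lambda>b. if b \<in> A then (if b \<in> G then of_int (m b) *\<^sub>R b else 0) else undefined) a)"
    by (rule dsum_eq) (use assms in auto)
  also have "\<dots> = (\<Sum>b\<in>G. of_int (m b) *\<^sub>R b)"
    by (rule sum.cong) (use assms in auto)
  finally show ?thesis .
qed

lemma P1:
  fixes A :: "'a::{real_vector,t2_space} set"
  assumes "is_tychonoff_dsum A"
  shows "ZC A"
  unfolding ZC_def
proof (intro allI impI)
  fix W :: "'a set" assume W: "open W \<and> 0 \<in> W"
  let ?T = "tychonoff_dsum A"
  let ?P = "product_topology (\<lambda>a. subtopology euclidean (zspan {a})) A"
  have cm: "continuous_map ?T (subtopology euclidean (zspan A)) (dsum_map A)"
    using assms unfolding is_tychonoff_dsum_def by (rule homeomorphic_imp_continuous_map)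
  have "openin (subtopology euclidean (zspan A)) (zspan A \<inter> W)"
    using W by (simp add: openin_subtopology_Int2)
  then have op: "openin ?T {g \<in> topspace ?T. dsum_map A g \<in> zspan A \<inter> W}"
    by (rule openin_continuous_map_preimage[OF cm])
  define g0 where "g0 = (\<lambda>b. if b \<in> A then (if b \<in> {} then of_int ((\<lambda>_. 0::int) b) *\<^sub>R b else 0) else undefined)"
  have g0c: "g0 \<in> dsum_carrier A" unfolding g0_def by (rule dsum_carrierI) auto
  have "dsum_map A g0 = (\<Sum>b\<in>{}. of_int ((\<lambda>_. 0::int) b) *\<^sub>R b)" unfolding g0_def by (rule dsum_map_I) auto
  then have g0m: "dsum_map A g0 = 0" by simp
  have g0P: "g0 \<in> {g \<in> topspace ?T. dsum_map A g \<in> zspan A \<inter> W}"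
    using g0c g0m W zspanI[of "{}" A] by (simp add: topspace_tych)
  obtain Q where Q: "openin ?P Q" "{g \<in> topspace ?T. dsum_map A g \<in> zspan A \<inter> W} = Q \<inter> dsum_carrier A"
    using op unfolding tychonoff_dsum_def openin_subtopology by blast
  have "g0 \<in> Q" using g0P Q(2) by blast
  then obtain X where X: "g0 \<in> (\<Pi>\<^sub>E i\<in>A. X i)" "\<forall>i. openin (subtopology euclidean (zspan {i})) (X i)"
     "finite {i. X i \<noteq> topspace (subtopology euclidean (zspan {i}))}" "(\<Pi>\<^sub>E i\<in>A. X i) \<subseteq> Q"
    using product_topology_open_contains_basis[OF Q(1)] by blast
  define F where "F = {i \<in> A. X i \<noteq> zspan {i}}"
  have Ffin: "finite F" using X(3) unfolding F_def by (auto intro: finite_subset)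
  show "\<exists>F. finite F \<and> F \<subseteq> A \<and> zspan (A - F) \<subseteq> W"
  proof (intro exI[of _ F] conjI)
    show "finite F" by fact
    show "F \<subseteq> A" unfolding F_def by auto
    show "zspan (A - F) \<subseteq> W"
    proof
    fix z assume "z \<in> zspan (A - F)"
    then obtain G m where G: "z = (\<Sum>b\<in>G. of_int (m b) *\<^sub>R b)" "finite G" "G \<subseteq> A - F"
      unfolding zspan_def by blast
    define g where "g = (\<lambda>b. if b \<in> A then (if b \<in> G then of_int (m b) *\<^sub>R b else 0) else undefined)"
    have gc: "g \<in> dsum_carrier A" unfolding g_def by (rule dsum_carrierI) (use G in auto)
    have gm: "dsum_map A g = z" unfolding g_def G(1) by (rule dsum_map_I) (use G in auto)
    have "g \<in> (\<Pi>\<^sub>E i\<in>A. X i)"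
    proof (rule PiE_I)
      fix i assume i: "i \<in> A"
      show "g i \<in> X i"
      proof (cases "i \<in> F")
        case True
        then have "g i = 0" using G(3) i unfolding g_def by auto
        moreover have "g0 i = 0" using i unfolding g0_def by auto
        moreover have "g0 i \<in> X i" using X(1) i by blast
        ultimately show ?thesis by simp
      next
        case False
        then have "X i = zspan {i}" using i unfolding F_def by auto
        moreover have "g i \<in> zspan {i}" using i unfolding g_def
          by (auto simp: zmult_in zero_in_zspan1)
        ultimately show ?thesis by simp
      qed
    next
      fix i assume "i \<notin> A" then show "g i = undefined" unfolding g_def by simp
    qed
    then have "g \<in> Q" using X(4) by blast
    then have "g \<in> {g \<in> topspace ?T. dsum_map A g \<in> zspan A \<inter> W}" using Q(2) gc by blast
    then show "z \<in> W" using gm by simp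
    qed
  qed
qed


definition cf :: "('a::real_vector \<Rightarrow> 'a) \<Rightarrow> 'a \<Rightarrow> int" where
  "cf g a = (SOME k. g a = of_int k *\<^sub>R a)"

lemma cf_eq:
  assumes "g \<in> dsum_carrier A" "a \<in> A"
  shows "g a = of_int (cf g a) *\<^sub>R a"
proof -
  have "g a \<in> zspan {a}" using assms unfolding dsum_carrier_def by auto
  then have "\<exists>k::int. g a = of_int k *\<^sub>R a" unfolding zspan_single by auto
  then show ?thesis unfolding cf_def by (rule someI_ex)
qed

lemma carrier_supp_fin: "g \<in> dsum_carrier A \<Longrightarrow> finite {a\<in>A. g a \<noteq> 0}"
  unfolding dsum_carrier_def by auto

lemma carrier_ext: "g \<in> dsum_carrier A \<Longrightarrow> a \<notin> A \<Longrightarrow> g a = undefined"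
  unfolding dsum_carrier_def by (auto simp: PiE_def extensional_def)

lemma dsum_diff:
  assumes g: "g \<in> dsum_carrier A" and h: "h \<in> dsum_carrier A"
  defines "S \<equiv> {a\<in>A. g a \<noteq> 0} \<union> {a\<in>A. h a \<noteq> 0}"
  shows "dsum_map A h - dsum_map A g = (\<Sum>a\<in>S. of_int (cf h a - cf g a) *\<^sub>R a)"
proof -
  have fS: "finite S" unfolding S_def using carrier_supp_fin[OF g] carrier_supp_fin[OF h] by auto
  have "dsum_map A h = (\<Sum>a\<in>S. h a)" by (rule dsum_eq) (use fS in \<open>auto simp: S_def\<close>)
  moreover have "dsum_map A g = (\<Sum>a\<in>S. g a)" by (rule dsum_eq) (use fS in \<open>auto simp: S_def\<close>)
  ultimately have "dsum_map A h - dsum_map A g = (\<Sum>a\<in>S. h a - g a)" by (simp add: sum_subtractf)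
  also have "\<dots> = (\<Sum>a\<in>S. of_int (cf h a - cf g a) *\<^sub>R a)"
  proof (rule sum.cong)
    fix a assume "a \<in> S" then have "a \<in> A" unfolding S_def by auto
    then show "h a - g a = of_int (cf h a - cf g a) *\<^sub>R a"
      using cf_eq[OF g] cf_eq[OF h] by (simp add: scaleR_left_diff_distrib)
  qed simp
  finally show ?thesis .
qed

lemma dsum_image: "dsum_map A ` dsum_carrier A = zspan A"
proof
  show "dsum_map A ` dsum_carrier A \<subseteq> zspan A"
  proof
    fix y assume "y \<in> dsum_map A ` dsum_carrier A"
    then obtain g where g: "g \<in> dsum_carrier A" "y = dsum_map A g" by blast
    let ?S = "{a\<in>A. g a \<noteq> 0}"
    have "y = (\<Sum>a\<in>?S. g a)" unfolding g(2) dsum_map_def by simp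
    also have "\<dots> = (\<Sum>a\<in>?S. of_int (cf g a) *\<^sub>R a)"
      by (rule sum.cong) (use cf_eq[OF g(1)] in auto)
    also have "\<dots> \<in> zspan A" by (rule zspanI) (use carrier_supp_fin[OF g(1)] in auto)
    finally show "y \<in> zspan A" .
  qed
next
  show "zspan A \<subseteq> dsum_map A ` dsum_carrier A"
  proof
    fix z assume "z \<in> zspan A"
    then obtain G m where G: "z = (\<Sum>b\<in>G. of_int (m b) *\<^sub>R b)" "finite G" "G \<subseteq> A"
      unfolding zspan_def by blast
    show "z \<in> dsum_map A ` dsum_carrier A"
      by (rule image_eqI[OF _ dsum_carrierI[OF G(2,3), of m]]) (use dsum_map_I[OF G(2,3), of m] G(1) in simp)
  qed
qed

context
  assumes tvs: "tvs_ops_continuous TYPE('a::{real_vector,t2_space})"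
begin

lemma dsum_inj:
  fixes A :: "'a set"
  assumes ti: "top_independent A"
  shows "inj_on (dsum_map A) (dsum_carrier A)"
proof (rule inj_onI)
  fix g h assume g: "g \<in> dsum_carrier A" and h: "h \<in> dsum_carrier A" and eq: "dsum_map A g = dsum_map A h"
  define S where "S = {a\<in>A. g a \<noteq> 0} \<union> {a\<in>A. h a \<noteq> 0}"
  have fS: "finite S" unfolding S_def using carrier_supp_fin[OF g] carrier_supp_fin[OF h] by auto
  have "(\<Sum>a\<in>S. of_int ((\<lambda>a. cf h a - cf g a) a) *\<^sub>R a) = 0"
    using dsum_diff[OF g h] eq unfolding S_def by simp
  then have z: "\<forall>a\<in>S. cf h a - cf g a = 0"
    using ti_Zindep[OF tvs ti fS, of "\<lambda>a. cf h a - cf g a"] unfolding S_def by auto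
  show "g = h"
  proof
    fix a show "g a = h a"
    proof (cases "a \<in> A")
      case False then show ?thesis using carrier_ext[OF g] carrier_ext[OF h] by simp
    next
      case True
      show ?thesis
      proof (cases "a \<in> S")
        case True
        then have "cf h a = cf g a" using z by simp
        then show ?thesis using cf_eq[OF g \<open>a\<in>A\<close>] cf_eq[OF h \<open>a\<in>A\<close>] by simp
      next
        case False then show ?thesis using \<open>a \<in> A\<close> unfolding S_def by auto
      qed
    qed
  qed
qed

end


context
  assumes tvs: "tvs_ops_continuous TYPE('a::{real_vector,t2_space})"
begin

lemma dsum_cont:
  fixes A :: "'a set"
  assumes ti: "top_independent A" and zc: "ZC A"
  shows "continuous_map (tychonoff_dsum A) (subtopology euclidean (zspan A)) (dsum_map A)"
  unfolding continuous_map_def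
proof (intro conjI allI impI)
  show "dsum_map A \<in> topspace (tychonoff_dsum A) \<rightarrow> topspace (top_of_set (zspan A))"
    using dsum_image[of A] by (auto simp: topspace_tych)
  fix V assume "openin (top_of_set (zspan A)) V"
  then obtain O' where O': "open O'" "V = O' \<inter> zspan A" unfolding openin_open by blast
  let ?T = "tychonoff_dsum A"
  let ?P = "product_topology (\<lambda>a. subtopology euclidean (zspan {a})) A"
  show "openin ?T {x \<in> topspace ?T. dsum_map A x \<in> V}"
  proof (subst openin_subopen, intro ballI)
    fix g assume "g \<in> {x \<in> topspace ?T. dsum_map A x \<in> V}"
    then have g: "g \<in> dsum_carrier A" "dsum_map A g \<in> O'" using O' by (auto simp: topspace_tych)
    define s where "s = dsum_map A g"
    define O1 where "O1 = (\<lambda>y. y + s) -` O'"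
    have O1: "open O1" "0 \<in> O1" unfolding O1_def using tvs_open_transl[OF tvs O'(1)] g(2) s_def by auto
    obtain F where F: "finite F" "F \<subseteq> A" "zspan (A - F) \<subseteq> O1"
      using zc O1 unfolding ZC_def by blast
    have "0 \<notin> F" using ti_0[OF ti] F by auto
    obtain W where W: "open W" "0 \<in> W" "\<forall>a\<in>F. \<forall>k::int. of_int k *\<^sub>R a \<in> W \<longrightarrow> k = 0"
      using tvs_exclude_fin[OF tvs F(1) \<open>0 \<notin> F\<close>] by (elim exE conjE) (rule that)
    define X where "X = (\<lambda>i. if i \<in> F then zspan {i} \<inter> ((\<lambda>y. y + (- g i)) -` W) else zspan {i})"
    have Xo: "openin (top_of_set (zspan {i})) (X i)" for i
    proof (cases "i \<in> F")
      case True
      have "open ((\<lambda>y. y + (- g i)) -` W)" by (rule tvs_open_transl[OF tvs W(1)])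
      then show ?thesis using True unfolding X_def by (simp add: openin_subtopology_Int2)
    next
      case False then show ?thesis unfolding X_def by simp
    qed
    have Xf: "finite {i. X i \<noteq> topspace (top_of_set (zspan {i}))}"
      by (rule finite_subset[OF _ F(1)]) (auto simp: X_def)
    have Bo: "openin ?P (\<Pi>\<^sub>E i\<in>A. X i)" by (rule product_topology_basis[OF Xo Xf])
    have Bo2: "openin ?T ((\<Pi>\<^sub>E i\<in>A. X i) \<inter> dsum_carrier A)"
      unfolding tychonoff_dsum_def by (rule openin_subtopology_Int[OF Bo])
    have gB: "g \<in> (\<Pi>\<^sub>E i\<in>A. X i)"
    proof (rule PiE_I)
      fix i assume i: "i \<in> A"
      have "g i \<in> zspan {i}" using g(1) i unfolding dsum_carrier_def by auto
      then show "g i \<in> X i" using W(2) unfolding X_def by auto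
    next
      fix i assume "i \<notin> A" then show "g i = undefined" using carrier_ext[OF g(1)] by simp
    qed
    have sub: "(\<Pi>\<^sub>E i\<in>A. X i) \<inter> dsum_carrier A \<subseteq> {x \<in> topspace ?T. dsum_map A x \<in> V}"
    proof
      fix h assume "h \<in> (\<Pi>\<^sub>E i\<in>A. X i) \<inter> dsum_carrier A"
      then have hB: "h \<in> (\<Pi>\<^sub>E i\<in>A. X i)" and h: "h \<in> dsum_carrier A" by auto
      define S where "S = {a\<in>A. g a \<noteq> 0} \<union> {a\<in>A. h a \<noteq> 0}"
      have fS: "finite S" unfolding S_def using carrier_supp_fin[OF g(1)] carrier_supp_fin[OF h] by auto
      have eqF: "cf h a = cf g a" if a: "a \<in> F" for a
      proof -
        have aA: "a \<in> A" using a F(2) by auto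
        have "h a \<in> X a" using hB aA by blast
        then have "h a + (- g a) \<in> W" using a unfolding X_def by auto
        moreover have "h a + (- g a) = of_int (cf h a - cf g a) *\<^sub>R a"
          using cf_eq[OF g(1) aA] cf_eq[OF h aA] by (simp add: scaleR_left_diff_distrib)
        ultimately have "of_int (cf h a - cf g a) *\<^sub>R a \<in> W" by simp
        then have "cf h a - cf g a = 0" using W(3) a by blast
        then show ?thesis by simp
      qed
      have "dsum_map A h - s = (\<Sum>a\<in>S. of_int (cf h a - cf g a) *\<^sub>R a)"
        unfolding s_def S_def by (rule dsum_diff[OF g(1) h])
      also have "\<dots> = (\<Sum>a\<in>S - F. of_int (cf h a - cf g a) *\<^sub>R a)"
        by (rule sum.mono_neutral_right) (use fS eqF in auto)
      also have "\<dots> \<in> zspan (A - F)" by (rule zspanI) (use fS in \<open>auto simp: S_def\<close>)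
      finally have "dsum_map A h - s \<in> O1" using F(3) by blast
      then have "dsum_map A h \<in> O'" unfolding O1_def by simp
      moreover have "dsum_map A h \<in> zspan A" using dsum_image[of A] h by blast
      ultimately show "h \<in> {x \<in> topspace ?T. dsum_map A x \<in> V}" using O'(2) h by (simp add: topspace_tych)
    qed
    show "\<exists>T. openin ?T T \<and> g \<in> T \<and> T \<subseteq> {x \<in> topspace ?T. dsum_map A x \<in> V}"
      by (rule exI[of _ "(\<Pi>\<^sub>E i\<in>A. X i) \<inter> dsum_carrier A"]) (use Bo2 gB g(1) sub in blast)
  qed
qed

end


context
  assumes tvs: "tvs_ops_continuous TYPE('a::{real_vector,t2_space})"
begin

lemma dsum_open:
  fixes A :: "'a set"
  assumes ti: "top_independent A"
  shows "open_map (tychonoff_dsum A) (subtopology euclidean (zspan A)) (dsum_map A)"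
  unfolding open_map_def
proof (intro allI impI)
  let ?T = "tychonoff_dsum A"
  let ?P = "product_topology (\<lambda>a. subtopology euclidean (zspan {a})) A"
  fix P assume "openin ?T P"
  then obtain Q where Q: "openin ?P Q" "P = Q \<inter> dsum_carrier A"
    unfolding tychonoff_dsum_def openin_subtopology by blast
  show "openin (top_of_set (zspan A)) (dsum_map A ` P)"
  proof (subst openin_subopen, intro ballI)
    fix y assume "y \<in> dsum_map A ` P"
    then obtain g where gP: "g \<in> P" and yg: "y = dsum_map A g" by blast
    have g: "g \<in> dsum_carrier A" "g \<in> Q" using gP Q(2) by auto
    obtain X where X: "g \<in> (\<Pi>\<^sub>E i\<in>A. X i)" "\<forall>i. openin (subtopology euclidean (zspan {i})) (X i)"
     "finite {i. X i \<noteq> topspace (subtopology euclidean (zspan {i}))}" "(\<Pi>\<^sub>E i\<in>A. X i) \<subseteq> Q"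
      using product_topology_open_contains_basis[OF Q(1) g(2)] by blast
    define F where "F = {i \<in> A. X i \<noteq> zspan {i}}"
    have Ffin: "finite F" using X(3) unfolding F_def by (auto intro: finite_subset)
    have FA: "F \<subseteq> A" unfolding F_def by auto
    obtain U where U: "open U" "0 \<in> U" "\<forall>H (z::'a \<Rightarrow> int). finite H \<and> H \<subseteq> A \<and> (\<Sum>a\<in>H. of_int (z a) *\<^sub>R a) \<in> U
               \<longrightarrow> (\<forall>a\<in>H \<inter> F. z a = 0)"
      using ti_nbhd[OF tvs ti Ffin FA] by (elim exE conjE) (rule that)
    define O1 where "O1 = (\<lambda>x. x + (- y)) -` U"
    have O1a: "open O1" unfolding O1_def by (rule tvs_open_transl[OF tvs U(1)])
    have O1: "open O1" "y \<in> O1" using O1a U(2) unfolding O1_def by auto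
    have sub: "zspan A \<inter> O1 \<subseteq> dsum_map A ` P"
    proof
      fix y' assume y': "y' \<in> zspan A \<inter> O1"
      then obtain h where h: "h \<in> dsum_carrier A" "y' = dsum_map A h"
        using dsum_image[of A] by auto
      define S where "S = {a\<in>A. g a \<noteq> 0} \<union> {a\<in>A. h a \<noteq> 0}"
      have fS: "finite S" unfolding S_def using carrier_supp_fin[OF g(1)] carrier_supp_fin[OF h(1)] by auto
      have SA: "S \<subseteq> A" unfolding S_def by auto
      have "(\<Sum>a\<in>S. of_int ((\<lambda>a. cf h a - cf g a) a) *\<^sub>R a) = y' + (- y)"
        using dsum_diff[OF g(1) h(1)] h(2) yg unfolding S_def by simp
      also have "\<dots> \<in> U" using y' unfolding O1_def by simp
      finally have "finite S \<and> S \<subseteq> A \<and> (\<Sum>a\<in>S. of_int ((\<lambda>a. cf h a - cf g a) a) *\<^sub>R a) \<in> U"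
        using fS SA by simp
      moreover have "finite S \<and> S \<subseteq> A \<and> (\<Sum>a\<in>S. of_int ((\<lambda>a. cf h a - cf g a) a) *\<^sub>R a) \<in> U
               \<longrightarrow> (\<forall>a\<in>S \<inter> F. (\<lambda>a. cf h a - cf g a) a = 0)"
        by (rule spec[OF spec[OF U(3), of S], of "\<lambda>a. cf h a - cf g a"])
      ultimately have z: "\<forall>a\<in>S \<inter> F. cf h a - cf g a = 0" by simp
      have "h \<in> (\<Pi>\<^sub>E i\<in>A. X i)"
      proof (rule PiE_I)
        fix i assume i: "i \<in> A"
        show "h i \<in> X i"
        proof (cases "i \<in> F")
          case True
          have "h i = g i"
          proof (cases "i \<in> S")
            case True
            then have "cf h i = cf g i" using z \<open>i \<in> F\<close> by auto
            then show ?thesis using cf_eq[OF g(1) i] cf_eq[OF h(1) i] by simp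
          next
            case False then show ?thesis using i unfolding S_def by auto
          qed
          then show ?thesis using X(1) i by auto
        next
          case False
          then have "X i = zspan {i}" using i unfolding F_def by auto
          moreover have "h i \<in> zspan {i}" using h(1) i unfolding dsum_carrier_def by auto
          ultimately show ?thesis by simp
        qed
      next
        fix i assume "i \<notin> A" then show "h i = undefined" using carrier_ext[OF h(1)] by simp
      qed
      then have "h \<in> P" using X(4) Q(2) h(1) by blast
      then show "y' \<in> dsum_map A ` P" using h(2) by blast
    qed
    have "openin (top_of_set (zspan A)) (zspan A \<inter> O1)" using O1(1) by (simp add: openin_subtopology_Int2)
    moreover have "y \<in> zspan A \<inter> O1" using O1(2) yg g(1) dsum_image[of A] by blast
    ultimately show "\<exists>T. openin (top_of_set (zspan A)) T \<and> y \<in> T \<and> T \<subseteq> dsum_map A ` P"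
      using sub by blast
  qed
qed

lemma P5:
  fixes A :: "'a set"
  assumes ti: "top_independent A" and zc: "ZC A"
  shows "is_tychonoff_dsum A"
  unfolding is_tychonoff_dsum_def
  by (rule bijective_open_imp_homeomorphic_map[OF dsum_cont[OF tvs ti zc] dsum_open[OF ti]])
     (simp_all add: topspace_tych dsum_image dsum_inj[OF tvs ti])

end


context
  assumes tvs: "tvs_ops_continuous TYPE('a::{real_vector,t2_space})"
begin

lemma P2:
  fixes A :: "'a set"
  assumes zc: "ZC A"
  shows "SC A"
  unfolding SC_def
proof (intro allI impI)
  fix W :: "'a set" assume W: "open W \<and> 0 \<in> W"
  obtain N1 where N1: "open N1" "0 \<in> N1" "\<forall>x\<in>N1. \<forall>y\<in>N1. x + y \<in> W"
    using tvs_half[OF tvs] W by blast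
  obtain d N2 where dN: "d > 0" "open N2" "0 \<in> N2" "\<forall>t x. \<bar>t\<bar> < d \<longrightarrow> x \<in> N2 \<longrightarrow> t *\<^sub>R x \<in> N1"
    using tvs_scal[OF tvs N1(1,2)] by blast
  obtain F where F: "finite F" "F \<subseteq> A" "zspan (A - F) \<subseteq> N2"
    using zc dN(2,3) unfolding ZC_def by blast
  have "span (A - F) \<subseteq> W"
  proof
    fix x assume "x \<in> span (A - F)"
    then obtain G c where G: "x = (\<Sum>b\<in>G. c b *\<^sub>R b)" "finite G" "G \<subseteq> A - F"
      unfolding span_explicit by blast
    obtain e where e: "e > 0" "\<forall>r. (\<forall>b\<in>G. \<bar>r b\<bar> < e) \<longrightarrow> (\<Sum>b\<in>G. r b *\<^sub>R b) \<in> N1"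
      using tvs_fin_comb[OF tvs G(2) N1(1,2)] by blast
    obtain n where n: "inverse (real (Suc n)) < min d e"
      using reals_Archimedean[of "min d e"] dN(1) e(1) by auto
    define k where "k = real (Suc n)"
    have k0: "k > 0" "k \<ge> 1" unfolding k_def by auto
    define z where "z = (\<Sum>b\<in>G. of_int (\<lfloor>k * c b\<rfloor>) *\<^sub>R b)"
    define r where "r = (\<lambda>b. (k * c b - of_int \<lfloor>k * c b\<rfloor>) / k)"
    have split: "x = (1/k) *\<^sub>R z + (\<Sum>b\<in>G. r b *\<^sub>R b)"
    proof -
      have "x = (\<Sum>b\<in>G. ((1/k) * of_int \<lfloor>k * c b\<rfloor> + r b) *\<^sub>R b)"
        unfolding G(1) r_def by (rule sum.cong) (use k0 in \<open>auto simp: field_simps\<close>)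
      also have "\<dots> = (1/k) *\<^sub>R z + (\<Sum>b\<in>G. r b *\<^sub>R b)"
        unfolding z_def by (simp add: scaleR_add_left sum.distrib scaleR_sum_right)
      finally show ?thesis .
    qed
    have "z \<in> zspan (A - F)" unfolding z_def by (rule zspanI) (use G in auto)
    then have "z \<in> N2" using F(3) by blast
    moreover have "\<bar>1/k\<bar> < d" using n k0 unfolding k_def by (simp add: inverse_eq_divide)
    ultimately have t1: "(1/k) *\<^sub>R z \<in> N1" using dN(4) by blast
    have "\<forall>b\<in>G. \<bar>r b\<bar> < e"
    proof
      fix b
      have "0 \<le> k * c b - of_int \<lfloor>k * c b\<rfloor>" "k * c b - of_int \<lfloor>k * c b\<rfloor> < 1" by linarith+
      then have "\<bar>r b\<bar> < 1 / k" unfolding r_def using k0 by (simp add: divide_strict_right_mono)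
      also have "1 / k < e" using n k0 unfolding k_def by (simp add: inverse_eq_divide)
      finally show "\<bar>r b\<bar> < e" .
    qed
    then have t2: "(\<Sum>b\<in>G. r b *\<^sub>R b) \<in> N1" using e(2) by blast
    show "x \<in> W" using N1(3) t1 t2 split by metis
  qed
  then show "\<exists>F. finite F \<and> F \<subseteq> A \<and> span (A - F) \<subseteq> W" using F(1,2) by blast
qed

end


lemma dirichlet_set:
  fixes G :: "'b set" and \<theta> :: "'b \<Rightarrow> real" and N :: nat
  assumes "finite G" "N > 0"
  shows "\<exists>q (p::'b \<Rightarrow> int). 0 < q \<and> q \<le> int (N ^ card G) \<and> (\<forall>b\<in>G. \<bar>of_int q * \<theta> b - of_int (p b)\<bar> < 1 / N)"
proof -
  obtain e where e: "bij_betw e {0..<card G} G" using ex_bij_betw_nat_finite[OF assms(1)] by blast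
  obtain q p where qp: "0 < q" "q \<le> int (N ^ card G)"
    "\<And>i. i < card G \<Longrightarrow> \<bar>of_int q * (\<theta> \<circ> e) i - of_int (p i)\<bar> < 1 / N"
    using Dirichlet_approx_simult[OF assms(2), where \<theta> = "\<theta> \<circ> e" and n = "card G"] by blast
  show ?thesis
  proof (intro exI[of _ q] exI[of _ "\<lambda>b. p (inv_into {0..<card G} e b)"] conjI ballI)
    show "0 < q" "q \<le> int (N ^ card G)" by (fact qp(1)) (fact qp(2))
    fix b assume b: "b \<in> G"
    let ?i = "inv_into {0..<card G} e b"
    have "?i \<in> {0..<card G}" using b e by (metis bij_betw_def inv_into_into)
    moreover have "e ?i = b" using b e by (rule bij_betw_inv_into_right[rotated])
    ultimately show "\<bar>of_int q * \<theta> b - of_int (p ?i)\<bar> < 1 / N" using qp(3)[of ?i] by auto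
  qed
qed

context
  assumes tvs: "tvs_ops_continuous TYPE('a::{real_vector,t2_space})"
begin

lemma tvs_three:
  fixes W :: "'a set"
  assumes "open W" "0 \<in> W"
  shows "\<exists>N. open N \<and> 0 \<in> N \<and> (\<forall>x\<in>N. \<forall>y\<in>N. \<forall>z\<in>N. x + y + z \<in> W)"
proof -
  obtain M where M: "open M" "0 \<in> M" "\<forall>x\<in>M. \<forall>y\<in>M. x + y \<in> W" using tvs_half[OF tvs assms] by blast
  obtain N where N: "open N" "0 \<in> N" "\<forall>x\<in>N. \<forall>y\<in>N. x + y \<in> M" using tvs_half[OF tvs M(1,2)] by blast
  have NM: "N \<subseteq> M" using N(2,3) by (metis add.right_neutral subsetI)
  show ?thesis using M N NM by (intro exI[of _ N]) blast
qed

lemma tvs_scal_bound: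
  fixes W :: "'a set" and K :: real
  assumes "open W" "0 \<in> W" "K > 0"
  shows "\<exists>Q. open Q \<and> 0 \<in> Q \<and> (\<forall>s y. \<bar>s\<bar> \<le> K \<longrightarrow> y \<in> Q \<longrightarrow> s *\<^sub>R y \<in> W)"
proof -
  obtain d N where dN: "d > 0" "open N" "0 \<in> N" "\<forall>t x. \<bar>t\<bar> < d \<longrightarrow> x \<in> N \<longrightarrow> t *\<^sub>R x \<in> W"
    using tvs_scal[OF tvs assms(1,2)] by blast
  define Q where "Q = (\<lambda>y. (2*K/d) *\<^sub>R y + 0) -` N"
  have "open Q" unfolding Q_def by (rule tvs_open_affine[OF tvs dN(2)])
  moreover have "0 \<in> Q" unfolding Q_def using dN(3) by simp
  moreover have "s *\<^sub>R y \<in> W" if s: "\<bar>s\<bar> \<le> K" and y: "y \<in> Q" for s y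
  proof -
    have "(2*K/d) *\<^sub>R y \<in> N" using y unfolding Q_def by simp
    moreover have "\<bar>s * d / (2*K)\<bar> < d"
    proof -
      have "\<bar>s * d / (2*K)\<bar> = \<bar>s\<bar> * d / (2*K)" using dN(1) assms(3) by (simp add: abs_mult)
      also have "\<dots> \<le> K * d / (2*K)" by (intro divide_right_mono mult_right_mono) (use s dN(1) assms(3) in auto)
      also have "\<dots> = d / 2" using assms(3) by simp
      also have "\<dots> < d" using dN(1) by simp
      finally show ?thesis .
    qed
    ultimately have "(s * d / (2*K)) *\<^sub>R ((2*K/d) *\<^sub>R y) \<in> W" using dN(4) by blast
    moreover have "(s * d / (2*K)) *\<^sub>R ((2*K/d) *\<^sub>R y) = s *\<^sub>R y"
      using dN(1) assms(3) by simp
    ultimately show ?thesis by metis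
  qed
  ultimately show ?thesis by blast
qed

end


context
  assumes tvs: "tvs_ops_continuous TYPE('a::{real_vector,t2_space})"
begin

lemma coef_bound:
  fixes A :: "'a set" and a :: 'a
  assumes ti: "top_independent A" and sc: "SC A" and a: "a \<in> A"
  shows "\<exists>Q. open Q \<and> 0 \<in> Q \<and>
     (\<forall>H u. finite H \<and> H \<subseteq> A \<and> a \<in> H \<and> (\<Sum>b\<in>H. u b *\<^sub>R b) \<in> Q \<longrightarrow> \<bar>u a\<bar> < 1)"
proof -
  obtain U0 where U0: "open U0" "0 \<in> U0" "\<forall>H (z::'a \<Rightarrow> int). finite H \<and> H \<subseteq> A \<and> (\<Sum>a\<in>H. of_int (z a) *\<^sub>R a) \<in> U0
               \<longrightarrow> (\<forall>b\<in>H \<inter> {a}. z b = 0)"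
  proof -
    have "finite {a}" "{a} \<subseteq> A" using a by auto
    from ti_nbhd[OF tvs ti this] show ?thesis by (elim exE conjE) (rule that)
  qed
  have U0z: "z a = 0" if "finite H" "H \<subseteq> A" "a \<in> H" "(\<Sum>a\<in>H. of_int (z a) *\<^sub>R a) \<in> U0" for H z
  proof -
    have "finite H \<and> H \<subseteq> A \<and> (\<Sum>a\<in>H. of_int (z a) *\<^sub>R a) \<in> U0" using that by simp
    then have "\<forall>b\<in>H \<inter> {a}. z b = 0" by (rule mp[OF spec[OF spec[OF U0(3), of H], of z]])
    then show ?thesis using that(3) by simp
  qed
  obtain N1 where N1: "open N1" "0 \<in> N1" "\<forall>x\<in>N1. \<forall>y\<in>N1. \<forall>z\<in>N1. x + y + z \<in> U0"
    using tvs_three[OF tvs U0(1,2)] by blast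
  obtain F where F: "finite F" "F \<subseteq> A" "span (A - F) \<subseteq> N1"
    using sc N1(1,2) unfolding SC_def by blast
  have aF: "a \<in> F"
  proof (rule ccontr)
    assume "a \<notin> F"
    then have "a \<in> span (A - F)" using a by (intro span_base) auto
    then have "a \<in> N1" using F(3) by blast
    then have "a + 0 + 0 \<in> U0" using N1 by blast
    then have "(\<Sum>b\<in>{a}. of_int ((\<lambda>_. 1::int) b) *\<^sub>R b) \<in> U0" by simp
    then have "(\<lambda>_. 1::int) a = 0" by (rule U0z[rotated 3]) (use a in auto)
    then show False by simp
  qed
  define G where "G = F - {a}"
  have Gf: "finite G" using F(1) unfolding G_def by simp
  obtain \<delta> where \<delta>: "\<delta> > 0" "\<forall>r. (\<forall>b\<in>G. \<bar>r b\<bar> < \<delta>) \<longrightarrow> (\<Sum>b\<in>G. r b *\<^sub>R b) \<in> N1"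
    using tvs_fin_comb[OF tvs Gf N1(1,2)] by blast
  obtain n where n: "inverse (real (Suc n)) < \<delta>" using reals_Archimedean \<delta>(1) by blast
  define Nd where "Nd = Suc n"
  have Nd: "Nd > 0" "1 / real Nd < \<delta>" using n unfolding Nd_def by (auto simp: inverse_eq_divide)
  define K where "K = real (Nd ^ card G)"
  have K: "K > 0" unfolding K_def using Nd(1) by simp
  obtain Q where Q: "open Q" "0 \<in> Q" "\<forall>s y. \<bar>s\<bar> \<le> K \<longrightarrow> y \<in> Q \<longrightarrow> s *\<^sub>R y \<in> N1"
    using tvs_scal_bound[OF tvs N1(1,2) K] by blast
  have main: "\<bar>u a\<bar> < 1" if H: "finite H" "H \<subseteq> A" "a \<in> H" "(\<Sum>b\<in>H. u b *\<^sub>R b) \<in> Q" for H u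
  proof (rule ccontr)
    assume "\<not> \<bar>u a\<bar> < 1"
    then have c1: "\<bar>u a\<bar> \<ge> 1" by simp
    define c where "c = u a"
    have c0: "c \<noteq> 0" using c1 unfolding c_def by auto
    define t where "t = (\<lambda>b. if b \<in> H then u b else 0)"
    define y where "y = (\<Sum>b\<in>H. u b *\<^sub>R b)"
    define r where "r = (\<Sum>b\<in>H - F. t b *\<^sub>R b)"
    have y1: "y = (\<Sum>b\<in>H \<union> F. t b *\<^sub>R b)"
    proof -
      have "y = (\<Sum>b\<in>H. t b *\<^sub>R b)" unfolding y_def t_def by (rule sum.cong) auto
      also have "\<dots> = (\<Sum>b\<in>H \<union> F. t b *\<^sub>R b)"
        by (rule sum.mono_neutral_left) (use H F in \<open>auto simp: t_def\<close>)
      finally show ?thesis .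
    qed
    have HF: "H \<union> F = insert a (G \<union> (H - F))" using aF H(3) unfolding G_def by auto
    have y2: "y = c *\<^sub>R a + (\<Sum>b\<in>G. t b *\<^sub>R b) + r"
    proof -
      have "a \<notin> G \<union> (H - F)" using aF unfolding G_def by auto
      then have "y = t a *\<^sub>R a + (\<Sum>b\<in>G \<union> (H - F). t b *\<^sub>R b)"
        unfolding y1 HF using Gf H(1) by simp
      also have "(\<Sum>b\<in>G \<union> (H - F). t b *\<^sub>R b) = (\<Sum>b\<in>G. t b *\<^sub>R b) + r"
        unfolding r_def by (rule sum.union_disjoint) (use Gf H(1) in \<open>auto simp: G_def\<close>)
      finally show ?thesis unfolding t_def c_def using H(3) by (simp add: add.assoc)
    qed
    have r_span: "r \<in> span (A - F)" unfolding r_def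
      by (intro span_sum span_scale) (use H(2) in \<open>auto intro: span_base\<close>)
    obtain q p where qp: "0 < q" "q \<le> int (Nd ^ card G)"
        "\<forall>b\<in>G. \<bar>of_int q * (t b / c) - of_int (p b)\<bar> < 1 / Nd"
      using dirichlet_set[OF Gf Nd(1), of "\<lambda>b. t b / c"] by blast
    define s where "s = of_int q / c"
    have s_bd: "\<bar>s\<bar> \<le> K"
    proof -
      have "\<bar>s\<bar> = of_int q / \<bar>c\<bar>" unfolding s_def using qp(1) by simp
      also have "\<dots> \<le> of_int q" using c1 qp(1) unfolding c_def by (simp add: divide_le_eq mult_le_cancel_left1)
      also have "\<dots> \<le> K" unfolding K_def using qp(2) by linarith
      finally show ?thesis .
    qed
    have e1: "s *\<^sub>R y \<in> N1" using Q(3) s_bd H(4) unfolding y_def by blast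
    have e2: "(- s) *\<^sub>R r \<in> N1" using F(3) span_scale[OF r_span, of "- s"] by blast
    have e3: "(\<Sum>b\<in>G. (of_int (p b) - of_int q * (t b / c)) *\<^sub>R b) \<in> N1"
    proof -
      have "\<forall>b\<in>G. \<bar>of_int (p b) - of_int q * (t b / c)\<bar> < \<delta>"
      proof
        fix b assume "b \<in> G"
        then have "\<bar>of_int q * (t b / c) - of_int (p b)\<bar> < 1 / Nd" using qp(3) by blast
        then show "\<bar>of_int (p b) - of_int q * (t b / c)\<bar> < \<delta>" using Nd(2) by linarith
      qed
      then show ?thesis using spec[OF \<delta>(2), of "\<lambda>b. of_int (p b) - of_int q * (t b / c)"] by simp
    qed
    have ident: "s *\<^sub>R y + (- s) *\<^sub>R r + (\<Sum>b\<in>G. (of_int (p b) - of_int q * (t b / c)) *\<^sub>R b)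
        = of_int q *\<^sub>R a + (\<Sum>b\<in>G. of_int (p b) *\<^sub>R b)"
    proof -
      have sa: "s *\<^sub>R (c *\<^sub>R a) = of_int q *\<^sub>R a" unfolding s_def using c0 by simp
      have sg: "s *\<^sub>R (\<Sum>b\<in>G. t b *\<^sub>R b) = (\<Sum>b\<in>G. (of_int q * (t b / c)) *\<^sub>R b)"
        unfolding s_def scaleR_sum_right by (rule sum.cong) auto
      have dg: "(\<Sum>b\<in>G. (of_int (p b) - of_int q * (t b / c)) *\<^sub>R b)
          = (\<Sum>b\<in>G. of_int (p b) *\<^sub>R b) - (\<Sum>b\<in>G. (of_int q * (t b / c)) *\<^sub>R b)"
        by (simp add: scaleR_left_diff_distrib sum_subtractf)
      show ?thesis unfolding y2 dg using sa sg by (simp add: scaleR_right_distrib algebra_simps)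
    qed
    have "s *\<^sub>R y + (- s) *\<^sub>R r + (\<Sum>b\<in>G. (of_int (p b) - of_int q * (t b / c)) *\<^sub>R b) \<in> U0"
      using N1(3) e1 e2 e3 by blast
    then have inU: "of_int q *\<^sub>R a + (\<Sum>b\<in>G. of_int (p b) *\<^sub>R b) \<in> U0" using ident by simp
    define z where "z = (\<lambda>b. if b = a then q else p b)"
    have aG: "a \<notin> G" unfolding G_def by simp
    have "(\<Sum>b\<in>insert a G. of_int (z b) *\<^sub>R b) = of_int q *\<^sub>R a + (\<Sum>b\<in>G. of_int (p b) *\<^sub>R b)"
    proof -
      have "(\<Sum>b\<in>insert a G. of_int (z b) *\<^sub>R b) = of_int (z a) *\<^sub>R a + (\<Sum>b\<in>G. of_int (z b) *\<^sub>R b)"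
        using Gf aG by simp
      also have "(\<Sum>b\<in>G. of_int (z b) *\<^sub>R b) = (\<Sum>b\<in>G. of_int (p b) *\<^sub>R b)"
        by (rule sum.cong) (use aG in \<open>auto simp: z_def\<close>)
      finally show ?thesis by (simp add: z_def)
    qed
    then have "(\<Sum>b\<in>insert a G. of_int (z b) *\<^sub>R b) \<in> U0" using inU by simp
    then have "z a = 0" by (rule U0z[rotated 3]) (use Gf F(2) a in \<open>auto simp: G_def\<close>)
    then show False using qp(1) by (simp add: z_def)
  qed
  show ?thesis using Q(1,2) main by blast
qed

end


lemma rep_sum_H:
  fixes A :: "'a::real_vector set"
  assumes ind: "independent A" and w: "w \<in> span A" and a: "a \<in> A"
  defines "H \<equiv> insert a {b. representation A w b \<noteq> 0}"
  shows "finite H" "H \<subseteq> A" "a \<in> H" "(\<Sum>b\<in>H. representation A w b *\<^sub>R b) = w"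
proof -
  show "finite H" unfolding H_def using real_vector.finite_representation by simp
  show "H \<subseteq> A" unfolding H_def using a real_vector.representation_ne_zero by auto
  show "a \<in> H" unfolding H_def by simp
  have "(\<Sum>b\<in>H. representation A w b *\<^sub>R b) = (\<Sum>b | representation A w b \<noteq> 0. representation A w b *\<^sub>R b)"
    by (rule sum.mono_neutral_right) (use real_vector.finite_representation in \<open>auto simp: H_def\<close>)
  also have "\<dots> = w" by (rule real_vector.sum_nonzero_representation_eq[OF ind w])
  finally show "(\<Sum>b\<in>H. representation A w b *\<^sub>R b) = w" .
qed

lemma linear_on_rep:
  fixes A :: "'a::real_vector set"
  assumes ind: "independent A"
  shows "linear_on (span A) (\<lambda>y. representation A y a)"
  unfolding linear_on_def
  using real_vector.representation_add[OF ind] real_vector.representation_scale[OF ind] by simp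

context
  assumes tvs: "tvs_ops_continuous TYPE('a::{real_vector,t2_space})"
begin

lemma SC_indep:
  fixes A :: "'a set"
  assumes ti: "top_independent A" and sc: "SC A"
  shows "independent A"
proof
  assume "dependent A"
  then obtain S u v where S: "finite S" "S \<subseteq> A" "(\<Sum>v\<in>S. u v *\<^sub>R v) = 0" "v \<in> S" "u v \<noteq> 0"
    unfolding real_vector.dependent_explicit by blast
  obtain Q where Q: "open Q" "0 \<in> Q"
     "\<forall>H u. finite H \<and> H \<subseteq> A \<and> v \<in> H \<and> (\<Sum>b\<in>H. u b *\<^sub>R b) \<in> Q \<longrightarrow> \<bar>u v\<bar> < 1"
  proof -
    have vA: "v \<in> A" using S(2,4) by auto
    show ?thesis using coef_bound[OF tvs ti sc vA] by (elim exE conjE) (rule that)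
  qed
  define u' where "u' = (\<lambda>b. (2 / \<bar>u v\<bar>) * u b)"
  have "(\<Sum>b\<in>S. u' b *\<^sub>R b) = (2 / \<bar>u v\<bar>) *\<^sub>R (\<Sum>v\<in>S. u v *\<^sub>R v)"
    unfolding u'_def scaleR_sum_right by simp
  then have "(\<Sum>b\<in>S. u' b *\<^sub>R b) \<in> Q" using S(3) Q(2) by simp
  then have "finite S \<and> S \<subseteq> A \<and> v \<in> S \<and> (\<Sum>b\<in>S. u' b *\<^sub>R b) \<in> Q" using S(1,2,4) by simp
  then have "\<bar>u' v\<bar> < 1" by (rule mp[OF spec[OF spec[OF Q(3), of S], of u']])
  moreover have "\<bar>u' v\<bar> = 2" unfolding u'_def using S(5) by (simp add: abs_mult)
  ultimately show False by simp
qed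

lemma rep_bound:
  fixes A :: "'a set"
  assumes ti: "top_independent A" and sc: "SC A" and a: "a \<in> A"
  shows "\<exists>Q. open Q \<and> 0 \<in> Q \<and> (\<forall>w\<in>span A. w \<in> Q \<longrightarrow> \<bar>representation A w a\<bar> < 1)"
proof -
  have ind: "independent A" by (rule SC_indep[OF ti sc])
  obtain Q where Q: "open Q" "0 \<in> Q"
     "\<forall>H u. finite H \<and> H \<subseteq> A \<and> a \<in> H \<and> (\<Sum>b\<in>H. u b *\<^sub>R b) \<in> Q \<longrightarrow> \<bar>u a\<bar> < 1"
    using coef_bound[OF tvs ti sc a] by (elim exE conjE) (rule that)
  have "\<bar>representation A w a\<bar> < 1" if w: "w \<in> span A" "w \<in> Q" for w
  proof -
    note R = rep_sum_H[OF ind w(1) a]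
    have "finite (insert a {b. representation A w b \<noteq> 0}) \<and> insert a {b. representation A w b \<noteq> 0} \<subseteq> A
       \<and> a \<in> insert a {b. representation A w b \<noteq> 0}
       \<and> (\<Sum>b\<in>insert a {b. representation A w b \<noteq> 0}. representation A w b *\<^sub>R b) \<in> Q"
      using R w(2) by simp
    then show ?thesis
      by (rule mp[OF spec[OF spec[OF Q(3), of "insert a {b. representation A w b \<noteq> 0}"], of "representation A w"]])
  qed
  then show ?thesis using Q(1,2) by blast
qed

lemma coord_cont:
  fixes A :: "'a set"
  assumes ti: "top_independent A" and sc: "SC A" and a: "a \<in> A"
  shows "continuous_on (span A) (\<lambda>y. representation A y a)"
  unfolding continuous_on_topological
proof (intro ballI allI impI)
  have ind: "independent A" by (rule SC_indep[OF ti sc])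
  obtain Q where Q: "open Q" "0 \<in> Q" "\<forall>w\<in>span A. w \<in> Q \<longrightarrow> \<bar>representation A w a\<bar> < 1"
    using rep_bound[OF ti sc a] by (elim exE conjE) (rule that)
  fix x B assume x: "x \<in> span A" and B: "open B" "representation A x a \<in> B"
  obtain e where e: "e > 0" "ball (representation A x a) e \<subseteq> B" using B openE by blast
  define A' where "A' = (\<lambda>y. (1/e) *\<^sub>R y + (- (1/e) *\<^sub>R x)) -` Q"
  have "open A'" unfolding A'_def by (rule tvs_open_affine[OF tvs Q(1)])
  moreover have "x \<in> A'" unfolding A'_def using Q(2) by simp
  moreover have "representation A y a \<in> B" if y: "y \<in> span A" "y \<in> A'" for y
  proof -
    define w where "w = (1/e) *\<^sub>R (y - x)"
    have wA: "w \<in> span A" unfolding w_def using x y(1) by (intro span_scale span_diff)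
    have wQ: "w \<in> Q" using y(2) unfolding A'_def w_def by (simp add: scaleR_diff_right)
    have eq: "representation A w a = (1/e) * (representation A y a - representation A x a)"
      unfolding w_def using real_vector.representation_scale[OF ind span_diff[OF y(1) x]]
        real_vector.representation_diff[OF ind x y(1)] by simp
    have "\<bar>representation A w a\<bar> < 1" using Q(3) wA wQ by blast
    then have "\<bar>(1/e) * (representation A y a - representation A x a)\<bar> < 1" unfolding eq .
    then have "\<bar>representation A y a - representation A x a\<bar> < e" using e(1) by (simp add: abs_mult divide_less_eq)
    then have "representation A y a \<in> ball (representation A x a) e" by (simp add: dist_real_def abs_minus_commute)
    then show ?thesis using e(2) by blast
  qed
  ultimately show "\<exists>A'. open A' \<and> x \<in> A' \<and> (\<forall>y\<in>span A. y \<in> A' \<longrightarrow> representation A y a \<in> B)" by blast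
qed

lemma coord_clf:
  fixes A :: "'a set"
  assumes ti: "top_independent A" and sc: "SC A" and a: "a \<in> A"
  shows "(\<lambda>y. representation A y a) \<in> cont_lin_functionals (span A)"
  unfolding cont_lin_functionals_def
  using linear_on_rep[OF SC_indep[OF ti sc]] coord_cont[OF ti sc a] by simp

end


lemma rep_sum_sup:
  fixes A :: "'a::real_vector set"
  assumes ind: "independent A" and w: "w \<in> span A" and H: "finite H" "{b. representation A w b \<noteq> 0} \<subseteq> H"
  shows "(\<Sum>b\<in>H. representation A w b *\<^sub>R b) = w"
proof -
  have "(\<Sum>b\<in>H. representation A w b *\<^sub>R b) = (\<Sum>b | representation A w b \<noteq> 0. representation A w b *\<^sub>R b)"
    by (rule sum.mono_neutral_right) (use H in auto)
  also have "\<dots> = w" by (rule real_vector.sum_nonzero_representation_eq[OF ind w])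
  finally show ?thesis .
qed

lemma gen_imp_open:
  fixes X :: "'a::{real_vector,topological_space} set"
  assumes "generate_topology_on {X \<inter> f -` V | f V. f \<in> cont_lin_functionals X \<and> open V} S"
  shows "openin (top_of_set X) S"
  using assms
proof (induction rule: generate_topology_on.induct)
  case Empty then show ?case by simp
next
  case (Int a b) then show ?case by (metis openin_Int)
next
  case (UN K) then show ?case by (intro openin_Union) blast
next
  case (Basis s)
  then obtain f V where fV: "s = X \<inter> f -` V" "f \<in> cont_lin_functionals X" "open V" by blast
  have "continuous_on X f" using fV(2) unfolding cont_lin_functionals_def by simp
  then show ?case unfolding fV(1) using fV(3) by (rule continuous_openin_preimage_gen)
qed

lemma zero_clf: "(\<lambda>_. 0) \<in> cont_lin_functionals X"
  unfolding cont_lin_functionals_def linear_on_def by simp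

lemma gen_X: "generate_topology_on {X \<inter> f -` V | f V. f \<in> cont_lin_functionals X \<and> open V} X"
proof (rule generate_topology_on.Basis)
  have "X = X \<inter> (\<lambda>_. 0::real) -` UNIV" by simp
  then show "X \<in> {X \<inter> f -` V | f V. f \<in> cont_lin_functionals X \<and> open V}"
    using zero_clf[of X] by blast
qed

lemma gen_fin_Int:
  fixes X :: "'a::{real_vector,topological_space} set"
  assumes "finite F" "\<forall>a\<in>F. generate_topology_on {X \<inter> f -` V | f V. f \<in> cont_lin_functionals X \<and> open V} (P a)"
  shows "generate_topology_on {X \<inter> f -` V | f V. f \<in> cont_lin_functionals X \<and> open V} (X \<inter> \<Inter>(P ` F))"
  using assms
proof (induction F rule: finite_induct)
  case empty then show ?case using gen_X by simp
next
  case (insert a F)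
  have "X \<inter> \<Inter>(P ` insert a F) = (X \<inter> \<Inter>(P ` F)) \<inter> P a" by auto
  then show ?case using insert by (simp add: generate_topology_on.Int)
qed

context
  assumes tvs: "tvs_ops_continuous TYPE('a::{real_vector,t2_space})"
begin

lemma P3:
  fixes A :: "'a set"
  assumes ti: "top_independent A" and sc: "SC A"
  shows "weak_topology_on (span A)"
proof -
  let ?X = "span A"
  let ?S = "{?X \<inter> f -` V | f V. f \<in> cont_lin_functionals ?X \<and> open V}"
  have ind: "independent A" by (rule SC_indep[OF tvs ti sc])
  have "generate_topology_on ?S S" if S: "openin (top_of_set ?X) S" for S
  proof -
    obtain T where T: "open T" "S = ?X \<inter> T" using S unfolding openin_open by blast
    have loc: "\<exists>B. generate_topology_on ?S B \<and> x \<in> B \<and> B \<subseteq> S" if x: "x \<in> S" for x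
    proof -
      have xX: "x \<in> ?X" and xT: "x \<in> T" using x T by auto
      define T1 where "T1 = (\<lambda>y. y + x) -` T"
      have T1: "open T1" "0 \<in> T1" unfolding T1_def using tvs_open_transl[OF tvs T(1)] xT by auto
      obtain N where N: "open N" "0 \<in> N" "\<forall>u\<in>N. \<forall>v\<in>N. u + v \<in> T1" using tvs_half[OF tvs T1] by blast
      obtain F where F: "finite F" "F \<subseteq> A" "span (A - F) \<subseteq> N"
        using sc N(1,2) unfolding SC_def by blast
      obtain \<delta> where \<delta>: "\<delta> > 0" "\<forall>r. (\<forall>b\<in>F. \<bar>r b\<bar> < \<delta>) \<longrightarrow> (\<Sum>b\<in>F. r b *\<^sub>R b) \<in> N"
        using tvs_fin_comb[OF tvs F(1) N(1,2)] by blast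
      define P where "P = (\<lambda>a. ?X \<inter> (\<lambda>y. representation A y a) -` ball (representation A x a) \<delta>)"
      define B where "B = ?X \<inter> \<Inter>(P ` F)"
      have "generate_topology_on ?S B" unfolding B_def
      proof (rule gen_fin_Int[OF F(1)], intro ballI generate_topology_on.Basis)
        fix a assume "a \<in> F"
        then have "(\<lambda>y. representation A y a) \<in> cont_lin_functionals ?X"
          using coord_clf[OF tvs ti sc] F(2) by blast
        then show "P a \<in> ?S" unfolding P_def by blast
      qed
      moreover have "x \<in> B" unfolding B_def P_def using xX \<delta>(1) by auto
      moreover have "B \<subseteq> S"
      proof
        fix y assume y: "y \<in> B"
        then have yX: "y \<in> ?X" unfolding B_def by auto
        define w where "w = y - x"
        have wX: "w \<in> ?X" unfolding w_def using yX xX by (rule span_diff)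
        have rw: "representation A w b = representation A y b - representation A x b" for b
          unfolding w_def using real_vector.representation_diff[OF ind xX yX] by simp
        have small: "\<forall>b\<in>F. \<bar>representation A w b\<bar> < \<delta>"
        proof
          fix b assume "b \<in> F"
          then have "y \<in> P b" using y unfolding B_def by auto
          then show "\<bar>representation A w b\<bar> < \<delta>" unfolding P_def rw by (simp add: dist_real_def abs_minus_commute)
        qed
        define H where "H = F \<union> {b. representation A w b \<noteq> 0}"
        have Hf: "finite H" unfolding H_def using F(1) real_vector.finite_representation by simp
        have "w = (\<Sum>b\<in>H. representation A w b *\<^sub>R b)"
          by (rule rep_sum_sup[OF ind wX Hf, symmetric]) (auto simp: H_def)
        also have "\<dots> = (\<Sum>b\<in>F. representation A w b *\<^sub>R b) + (\<Sum>b\<in>H - F. representation A w b *\<^sub>R b)"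
        proof -
          have "H = F \<union> (H - F)" unfolding H_def by auto
          then show ?thesis using sum.union_disjoint[of F "H - F" "\<lambda>b. representation A w b *\<^sub>R b"] F(1) Hf
            by (metis Diff_disjoint finite_Diff)
        qed
        finally have wsplit: "w = (\<Sum>b\<in>F. representation A w b *\<^sub>R b) + (\<Sum>b\<in>H - F. representation A w b *\<^sub>R b)" .
        have p1: "(\<Sum>b\<in>F. representation A w b *\<^sub>R b) \<in> N"
          using small spec[OF \<delta>(2), of "representation A w"] by simp
        have "(\<Sum>b\<in>H - F. representation A w b *\<^sub>R b) \<in> span (A - F)"
        proof (intro span_sum span_scale span_base)
          fix b assume "b \<in> H - F"
          then have "representation A w b \<noteq> 0 \<or> b \<in> F" unfolding H_def by auto
          with \<open>b \<in> H - F\<close> have "representation A w b \<noteq> 0" "b \<notin> F" by auto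
          then show "b \<in> A - F" using real_vector.representation_ne_zero by auto
        qed
        then have p2: "(\<Sum>b\<in>H - F. representation A w b *\<^sub>R b) \<in> N" using F(3) by blast
        have "w \<in> T1" using N(3) p1 p2 wsplit by metis
        then have "y \<in> T" unfolding T1_def w_def by simp
        then show "y \<in> S" using T(2) yX by simp
      qed
      ultimately show ?thesis by blast
    qed
    then have "\<forall>x\<in>S. \<exists>B. generate_topology_on ?S B \<and> x \<in> B \<and> B \<subseteq> S" by blast
    from bchoice[OF this] obtain Bf where Bf: "\<forall>x\<in>S. generate_topology_on ?S (Bf x) \<and> x \<in> Bf x \<and> Bf x \<subseteq> S"
      by (elim exE)
    have "S = \<Union>(Bf ` S)" using Bf by blast
    moreover have "generate_topology_on ?S (\<Union>(Bf ` S))"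
      by (rule generate_topology_on.UN) (use Bf in blast)
    ultimately show ?thesis by simp
  qed
  moreover have "openin (top_of_set ?X) S" if "generate_topology_on ?S S" for S
    using that by (rule gen_imp_open)
  ultimately show ?thesis
    unfolding weak_topology_on_def topology_eq openin_topology_generated_by_iff by blast
qed

end


lemma homog:
  fixes M :: "'i \<Rightarrow> 'j \<Rightarrow> real"
  assumes "finite I" "finite J" "card I < card J"
  shows "\<exists>c. (\<exists>j\<in>J. c j \<noteq> 0) \<and> (\<forall>i\<in>I. (\<Sum>j\<in>J. M i j * c j) = 0)"
  using assms
proof (induction I arbitrary: J M rule: finite_induct)
  case empty
  then obtain j where j: "j \<in> J" by fastforce
  show ?case by (rule exI[of _ "\<lambda>x. if x = j then 1 else 0"]) (use j in auto)
next
  case (insert i I)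
  show ?case
  proof (cases "\<forall>j\<in>J. M i j = 0")
    case True
    have "card I < card J" using insert by simp
    then obtain c where c: "\<exists>j\<in>J. c j \<noteq> 0" "\<forall>i\<in>I. (\<Sum>j\<in>J. M i j * c j) = 0"
      using insert.IH[OF insert.prems(1)] by blast
    show ?thesis by (rule exI[of _ c]) (use c True in auto)
  next
    case False
    then obtain j0 where j0: "j0 \<in> J" "M i j0 \<noteq> 0" by blast
    define J' where "J' = J - {j0}"
    define M' where "M' = (\<lambda>i' j. M i' j - M i' j0 * M i j / M i j0)"
    have fJ': "finite J'" unfolding J'_def using insert.prems(1) by simp
    have "card J' = card J - 1" unfolding J'_def using j0(1) insert.prems(1) by simp
    then have "card I < card J'" using insert by simp
    then obtain c' where c': "\<exists>j\<in>J'. c' j \<noteq> 0" "\<forall>i'\<in>I. (\<Sum>j\<in>J'. M' i' j * c' j) = 0"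
      using insert.IH[OF fJ', of M'] by blast
    define c where "c = (\<lambda>j. if j = j0 then - (\<Sum>j\<in>J'. M i j * c' j) / M i j0 else c' j)"
    have J: "J = insert j0 J'" "j0 \<notin> J'" unfolding J'_def using j0 by auto
    have cJ': "(\<Sum>j\<in>J'. N j * c j) = (\<Sum>j\<in>J'. N j * c' j)" for N :: "'j \<Rightarrow> real"
      by (rule sum.cong) (use J(2) in \<open>auto simp: c_def\<close>)
    have sumJ: "(\<Sum>j\<in>J. N j * c j) = N j0 * c j0 + (\<Sum>j\<in>J'. N j * c' j)" for N :: "'j \<Rightarrow> real"
      unfolding J(1) using fJ' J(2) cJ' by simp
    show ?thesis
    proof (intro exI[of _ c] conjI ballI)
      show "\<exists>j\<in>J. c j \<noteq> 0" using c' J by (auto simp: c_def)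
      fix i' assume i': "i' \<in> insert i I"
      show "(\<Sum>j\<in>J. M i' j * c j) = 0"
      proof (cases "i' = i")
        case True
        then show ?thesis using sumJ[of "M i"] j0(2) by (simp add: c_def)
      next
        case False
        then have i'I: "i' \<in> I" using i' by simp
        have "(\<Sum>j\<in>J. M i' j * c j) = M i' j0 * c j0 + (\<Sum>j\<in>J'. M i' j * c' j)" by (rule sumJ)
        also have "\<dots> = (\<Sum>j\<in>J'. M' i' j * c' j)"
          unfolding M'_def c_def using j0(2)
          by (simp add: algebra_simps sum_subtractf sum_distrib_left sum_divide_distrib)
        also have "\<dots> = 0" using c'(2) i'I by blast
        finally show ?thesis .
      qed
    qed
  qed
qed


lemma lin_zero:
  assumes "linear_on (span A) g"
  shows "g 0 = 0"
proof -
  have "g (0 *\<^sub>R 0) = 0 * g 0" using assms span_zero unfolding linear_on_def by blast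
  then show ?thesis by simp
qed

lemma lin_sum:
  assumes g: "linear_on (span A) g" and H: "finite H" "H \<subseteq> span A"
  shows "g (\<Sum>b\<in>H. r b *\<^sub>R b) = (\<Sum>b\<in>H. r b * g b)"
  using H
proof (induction H rule: finite_induct)
  case empty then show ?case using lin_zero[OF g] by simp
next
  case (insert b H)
  have bS: "b \<in> span A" using insert by simp
  have sS: "(\<Sum>b\<in>H. r b *\<^sub>R b) \<in> span A" using insert by (intro span_sum span_scale) auto
  have rbS: "r b *\<^sub>R b \<in> span A" using bS by (rule span_scale)
  have "g (\<Sum>b\<in>insert b H. r b *\<^sub>R b) = g (r b *\<^sub>R b + (\<Sum>b\<in>H. r b *\<^sub>R b))" using insert by simp
  also have "\<dots> = g (r b *\<^sub>R b) + g (\<Sum>b\<in>H. r b *\<^sub>R b)" using g rbS sS unfolding linear_on_def by blast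
  also have "g (r b *\<^sub>R b) = r b * g b" using g bS unfolding linear_on_def by blast
  finally show ?case using insert by simp
qed

lemma gen_nbhd:
  fixes X :: "'a::{real_vector,topological_space} set"
  assumes "generate_topology_on {X \<inter> f -` V | f V. f \<in> cont_lin_functionals X \<and> open V} S"
  shows "x \<in> S \<Longrightarrow> \<exists>\<Phi> \<delta>. finite \<Phi> \<and> \<Phi> \<subseteq> cont_lin_functionals X \<and> \<delta> > 0 \<and>
            (\<forall>y\<in>X. (\<forall>g\<in>\<Phi>. \<bar>g y - g x\<bar> < \<delta>) \<longrightarrow> y \<in> S)"
  using assms
proof (induction arbitrary: x rule: generate_topology_on.induct)
  case Empty then show ?case by simp
next
  case (Int a b)
  have xa: "x \<in> a" and xb: "x \<in> b" using Int.prems by auto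
  from Int.IH(1)[OF xa] obtain \<Phi>1 \<delta>1 where 1: "finite \<Phi>1" "\<Phi>1 \<subseteq> cont_lin_functionals X" "\<delta>1 > 0"
     "\<forall>y\<in>X. (\<forall>g\<in>\<Phi>1. \<bar>g y - g x\<bar> < \<delta>1) \<longrightarrow> y \<in> a" by (elim exE conjE)
  from Int.IH(2)[OF xb] obtain \<Phi>2 \<delta>2 where 2: "finite \<Phi>2" "\<Phi>2 \<subseteq> cont_lin_functionals X" "\<delta>2 > 0"
     "\<forall>y\<in>X. (\<forall>g\<in>\<Phi>2. \<bar>g y - g x\<bar> < \<delta>2) \<longrightarrow> y \<in> b" by (elim exE conjE)
  show ?case
  proof (intro exI[of _ "\<Phi>1 \<union> \<Phi>2"] exI[of _ "min \<delta>1 \<delta>2"] conjI ballI impI)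
    show "finite (\<Phi>1 \<union> \<Phi>2)" using 1(1) 2(1) by simp
    show "\<Phi>1 \<union> \<Phi>2 \<subseteq> cont_lin_functionals X" using 1(2) 2(2) by simp
    show "min \<delta>1 \<delta>2 > 0" using 1(3) 2(3) by simp
    fix y assume y: "y \<in> X" "\<forall>g\<in>\<Phi>1 \<union> \<Phi>2. \<bar>g y - g x\<bar> < min \<delta>1 \<delta>2"
    then have "\<forall>g\<in>\<Phi>1. \<bar>g y - g x\<bar> < \<delta>1" "\<forall>g\<in>\<Phi>2. \<bar>g y - g x\<bar> < \<delta>2" by auto
    then show "y \<in> a \<inter> b" using 1(4) 2(4) y(1) by blast
  qed
next
  case (UN K)
  from UN.prems obtain k where k: "k \<in> K" "x \<in> k" by blast
  from UN.IH[OF k] obtain \<Phi> \<delta> where P: "finite \<Phi>" "\<Phi> \<subseteq> cont_lin_functionals X" "\<delta> > 0"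
     "\<forall>y\<in>X. (\<forall>g\<in>\<Phi>. \<bar>g y - g x\<bar> < \<delta>) \<longrightarrow> y \<in> k" by (elim exE conjE)
  have "\<forall>y\<in>X. (\<forall>g\<in>\<Phi>. \<bar>g y - g x\<bar> < \<delta>) \<longrightarrow> y \<in> \<Union>K" using P(4) k(1) by blast
  then show ?case using P(1,2,3) by blast
next
  case (Basis s)
  from Basis.hyps obtain f V where fV: "s = X \<inter> f -` V" "f \<in> cont_lin_functionals X" "open V" by blast
  have "f x \<in> V" using Basis.prems fV(1) by auto
  then obtain e where e: "e > 0" "ball (f x) e \<subseteq> V" using fV(3) openE by blast
  show ?case
  proof (intro exI[of _ "{f}"] exI[of _ e] conjI ballI impI)
    show "finite {f}" "{f} \<subseteq> cont_lin_functionals X" "e > 0" using fV e by auto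
    fix y assume "y \<in> X" "\<forall>g\<in>{f}. \<bar>g y - g x\<bar> < e"
    then have "f y \<in> ball (f x) e" by (simp add: dist_real_def abs_minus_commute)
    then show "y \<in> s" using e(2) fV(1) \<open>y \<in> X\<close> by auto
  qed
qed

lemma weak_nbhd0:
  fixes A :: "'a::{real_vector,topological_space} set"
  assumes w: "weak_topology_on (span A)" and U: "open U" "0 \<in> U"
  shows "\<exists>\<Phi> \<delta>. finite \<Phi> \<and> \<Phi> \<subseteq> cont_lin_functionals (span A) \<and> \<delta> > 0 \<and>
            (\<forall>y\<in>span A. (\<forall>g\<in>\<Phi>. \<bar>g y\<bar> < \<delta>) \<longrightarrow> y \<in> U)"
proof -
  let ?S = "{span A \<inter> f -` V | f V. f \<in> cont_lin_functionals (span A) \<and> open V}"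
  have "openin (top_of_set (span A)) (span A \<inter> U)" using U(1) by (simp add: openin_open_Int)
  then have "openin (topology_generated_by ?S) (span A \<inter> U)" using w unfolding weak_topology_on_def by simp
  then have g: "generate_topology_on ?S (span A \<inter> U)" by (simp add: openin_topology_generated_by_iff)
  have "0 \<in> span A \<inter> U" using U(2) span_zero by auto
  from gen_nbhd[OF g this] obtain \<Phi> \<delta> where P: "finite \<Phi>" "\<Phi> \<subseteq> cont_lin_functionals (span A)" "\<delta> > 0"
     "\<forall>y\<in>span A. (\<forall>g\<in>\<Phi>. \<bar>g y - g 0\<bar> < \<delta>) \<longrightarrow> y \<in> span A \<inter> U" by blast
  have g0: "g 0 = 0" if "g \<in> \<Phi>" for g
    using that P(2) lin_zero unfolding cont_lin_functionals_def by blast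
  have "y \<in> U" if "y \<in> span A" "\<forall>g\<in>\<Phi>. \<bar>g y\<bar> < \<delta>" for y
  proof -
    have "\<forall>g\<in>\<Phi>. \<bar>g y - g 0\<bar> < \<delta>"
    proof
      fix g assume gP: "g \<in> \<Phi>"
      then have "g 0 = 0" by (rule g0)
      then show "\<bar>g y - g 0\<bar> < \<delta>" using that(2) gP by simp
    qed
    then show ?thesis using P(4) that(1) by blast
  qed
  then show ?thesis using P(1,2,3) by (intro exI[of _ \<Phi>] exI[of _ \<delta>]) auto
qed


context
  assumes tvs: "tvs_ops_continuous TYPE('a::{real_vector,t2_space})"
begin

lemma fin_supp:
  fixes A :: "'a set"
  assumes ti: "top_independent A" and w: "weak_topology_on (span A)"
    and f: "f \<in> cont_lin_functionals (span A)"
  shows "finite {a\<in>A. f a \<noteq> 0}"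
proof (rule ccontr)
  assume inf: "infinite {a\<in>A. f a \<noteq> 0}"
  let ?X = "span A"
  have flin: "linear_on ?X f" and fcont: "continuous_on ?X f"
    using f unfolding cont_lin_functionals_def by auto
  have "openin (top_of_set ?X) (?X \<inter> f -` {-1<..<1})"
    by (rule continuous_openin_preimage_gen[OF fcont]) simp
  then obtain W1 where W1: "open W1" "?X \<inter> f -` {-1<..<1} = ?X \<inter> W1"
    unfolding openin_open by blast
  have "0 \<in> ?X \<inter> f -` {-1<..<1}" using lin_zero[OF flin] span_zero by simp
  then have W10: "0 \<in> W1" using W1(2) by blast
  obtain U1 where U1: "open U1" "0 \<in> U1"
    "\<forall>F (z::'a \<Rightarrow> int). finite F \<and> F \<subseteq> A \<and> (\<Sum>a\<in>F. of_int (z a) *\<^sub>R a) \<in> U1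
         \<longrightarrow> (\<forall>a\<in>F. of_int (z a) *\<^sub>R a \<in> W1)"
    using ti_get[OF ti W1(1) W10] by (elim exE conjE) (rule that)
  obtain \<Phi> \<delta> where P: "finite \<Phi>" "\<Phi> \<subseteq> cont_lin_functionals ?X" "\<delta> > 0"
      "\<forall>y\<in>?X. (\<forall>g\<in>\<Phi>. \<bar>g y\<bar> < \<delta>) \<longrightarrow> y \<in> U1"
    using weak_nbhd0[OF w U1(1,2)] by (elim exE conjE) (rule that)
  obtain H where H: "H \<subseteq> {a\<in>A. f a \<noteq> 0}" "finite H" "card H = Suc (card \<Phi>)"
    using infinite_arbitrarily_large[OF inf] by blast
  have HA: "H \<subseteq> A" using H(1) by auto
  have HX: "H \<subseteq> ?X" using HA span_base by blast
  have "card \<Phi> < card H" using H(3) by simp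
  from homog[OF P(1) H(2) this, of "\<lambda>g b. g b"] obtain c where
    c: "\<exists>j\<in>H. c j \<noteq> 0" "\<forall>g\<in>\<Phi>. (\<Sum>b\<in>H. g b * c b) = 0" by blast
  from c(1) obtain b0 where b0: "b0 \<in> H" "c b0 \<noteq> 0" by blast
  define \<theta> where "\<theta> = (\<lambda>b. c b / c b0)"
  have \<theta>sum: "(\<Sum>b\<in>H. \<theta> b * g b) = 0" if "g \<in> \<Phi>" for g
  proof -
    have "(\<Sum>b\<in>H. \<theta> b * g b) = (\<Sum>b\<in>H. g b * c b) / c b0"
      unfolding \<theta>_def sum_divide_distrib by (rule sum.cong) auto
    then show ?thesis using c(2) that by simp
  qed
  have \<theta>b0: "\<theta> b0 = 1" unfolding \<theta>_def using b0(2) by simp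
  have glin: "linear_on ?X g" if "g \<in> \<Phi>" for g
    using that P(2) unfolding cont_lin_functionals_def by auto
  define C where "C = (\<Sum>g\<in>\<Phi>. \<Sum>b\<in>H. \<bar>g b\<bar>) + 1"
  have C0: "C > 0" unfolding C_def by (simp add: add_nonneg_pos sum_nonneg)
  have gC: "(\<Sum>b\<in>H. \<bar>g b\<bar>) \<le> C" if "g \<in> \<Phi>" for g
  proof -
    have "(\<Sum>b\<in>H. \<bar>g b\<bar>) \<le> (\<Sum>g\<in>\<Phi>. \<Sum>b\<in>H. \<bar>g b\<bar>)"
      by (rule member_le_sum[OF that _ P(1)]) (simp add: sum_nonneg)
    then show ?thesis unfolding C_def by simp
  qed
  have bound: "\<bar>f b0\<bar> < 1 / real n" if n: "n \<ge> 1" for n :: nat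
  proof -
    define Nd where "Nd = nat \<lceil>real n * C / \<delta>\<rceil> + 2"
    have Nd1: "real Nd > real n * C / \<delta>" unfolding Nd_def by linarith
    have Nd2: "Nd \<ge> 2" unfolding Nd_def by simp
    obtain q p where qp: "0 < q" "q \<le> int (Nd ^ card H)"
        "\<forall>b\<in>H. \<bar>of_int q * \<theta> b - of_int (p b)\<bar> < 1 / Nd"
      using dirichlet_set[OF H(2), of Nd \<theta>] Nd2 by auto
    have pb0: "p b0 = q"
    proof -
      have "\<bar>of_int q - of_int (p b0)\<bar> < (1::real) / Nd" using qp(3) b0(1) \<theta>b0 by force
      also have "(1::real) / Nd \<le> 1" using Nd2 by simp
      finally have "\<bar>of_int (q - p b0)\<bar> < (1::real)" by simp
      then have "\<bar>q - p b0\<bar> < 1" by linarith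
      then show ?thesis by simp
    qed
    define z where "z = (\<lambda>b. int n * p b)"
    define Zv where "Zv = (\<Sum>b\<in>H. of_int (z b) *\<^sub>R b)"
    have ZX: "Zv \<in> ?X" unfolding Zv_def using HX by (intro span_sum span_scale) auto
    have gZ: "\<bar>g Zv\<bar> < \<delta>" if g: "g \<in> \<Phi>" for g
    proof -
      have "g Zv = (\<Sum>b\<in>H. of_int (z b) * g b)" unfolding Zv_def by (rule lin_sum[OF glin[OF g] H(2) HX])
      also have "\<dots> = real n * (\<Sum>b\<in>H. (of_int (p b) - of_int q * \<theta> b) * g b)"
      proof -
        have "(\<Sum>b\<in>H. (of_int (p b) - of_int q * \<theta> b) * g b)
            = (\<Sum>b\<in>H. of_int (p b) * g b) - of_int q * (\<Sum>b\<in>H. \<theta> b * g b)"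
          by (simp add: algebra_simps sum_subtractf sum_distrib_left)
        also have "\<dots> = (\<Sum>b\<in>H. of_int (p b) * g b)" using \<theta>sum[OF g] by simp
        finally show ?thesis unfolding z_def by (simp add: sum_distrib_left algebra_simps)
      qed
      finally have eq: "g Zv = real n * (\<Sum>b\<in>H. (of_int (p b) - of_int q * \<theta> b) * g b)" .
      have "\<bar>\<Sum>b\<in>H. (of_int (p b) - of_int q * \<theta> b) * g b\<bar> \<le> (\<Sum>b\<in>H. \<bar>(of_int (p b) - of_int q * \<theta> b) * g b\<bar>)"
        by (rule sum_abs)
      also have "\<dots> \<le> (\<Sum>b\<in>H. (1 / Nd) * \<bar>g b\<bar>)"
      proof (rule sum_mono)
        fix b assume "b \<in> H"
        then have "\<bar>of_int (p b) - of_int q * \<theta> b\<bar> \<le> 1 / Nd" using qp(3) by (simp add: abs_minus_commute less_imp_le)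
        then have "\<bar>of_int (p b) - of_int q * \<theta> b\<bar> * \<bar>g b\<bar> \<le> (1 / Nd) * \<bar>g b\<bar>"
          by (rule mult_right_mono) simp
        then show "\<bar>(of_int (p b) - of_int q * \<theta> b) * g b\<bar> \<le> (1 / Nd) * \<bar>g b\<bar>"
          by (simp add: abs_mult)
      qed
      also have "\<dots> = (1 / Nd) * (\<Sum>b\<in>H. \<bar>g b\<bar>)" by (simp add: sum_distrib_left)
      also have "\<dots> \<le> (1 / Nd) * C" using gC[OF g] by (intro mult_left_mono) auto
      finally have s1: "\<bar>\<Sum>b\<in>H. (of_int (p b) - of_int q * \<theta> b) * g b\<bar> \<le> C / Nd" by simp
      have "\<bar>g Zv\<bar> = real n * \<bar>\<Sum>b\<in>H. (of_int (p b) - of_int q * \<theta> b) * g b\<bar>" unfolding eq by (simp add: abs_mult)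
      also have "\<dots> \<le> real n * (C / Nd)" using s1 by (intro mult_left_mono) auto
      also have "\<dots> < \<delta>"
      proof -
        have "real n * C < \<delta> * Nd" using Nd1 P(3) by (simp add: divide_less_eq mult.commute)
        then show ?thesis using Nd2 by (simp add: divide_less_eq)
      qed
      finally show ?thesis .
    qed
    have "Zv \<in> U1" using P(4) ZX gZ by blast
    then have "finite H \<and> H \<subseteq> A \<and> (\<Sum>a\<in>H. of_int (z a) *\<^sub>R a) \<in> U1" using H(2) HA unfolding Zv_def by simp
    then have "\<forall>a\<in>H. of_int (z a) *\<^sub>R a \<in> W1" by (rule mp[OF spec[OF spec[OF U1(3), of H], of z]])
    then have vW: "of_int (z b0) *\<^sub>R b0 \<in> W1" using b0(1) by blast
    have vX: "of_int (z b0) *\<^sub>R b0 \<in> ?X" using HX b0(1) by (intro span_scale) auto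
    have "of_int (z b0) *\<^sub>R b0 \<in> ?X \<inter> f -` {-1<..<1}" using W1(2) vW vX by blast
    then have "\<bar>f (of_int (z b0) *\<^sub>R b0)\<bar> < 1" by (simp add: abs_less_iff)
    moreover have "f (of_int (z b0) *\<^sub>R b0) = of_int (z b0) * f b0"
      using flin HX b0(1) unfolding linear_on_def by blast
    ultimately have lt: "\<bar>of_int (z b0) * f b0\<bar> < 1" by simp
    have "real n \<le> \<bar>of_int (z b0)\<bar>"
    proof -
      have "z b0 = int n * q" unfolding z_def pb0 by simp
      then have "\<bar>of_int (z b0) :: real\<bar> = real n * of_int q" using qp(1) by (simp add: abs_mult)
      also have "\<dots> \<ge> real n * 1" using qp(1) by (intro mult_left_mono) auto
      finally show ?thesis by simp
    qed
    then have "real n * \<bar>f b0\<bar> \<le> \<bar>of_int (z b0)\<bar> * \<bar>f b0\<bar>" by (simp add: mult_right_mono)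
    also have "\<dots> < 1" using lt by (simp add: abs_mult)
    finally have "real n * \<bar>f b0\<bar> < 1" .
    then show ?thesis using n by (simp add: field_simps)
  qed
  have fb0: "f b0 \<noteq> 0" using H(1) b0(1) by auto
  have "\<bar>f b0\<bar> > 0" using fb0 by simp
  then obtain n where "inverse (real (Suc n)) < \<bar>f b0\<bar>" using reals_Archimedean by blast
  moreover have "\<bar>f b0\<bar> < 1 / real (Suc n)" by (rule bound) simp
  ultimately show False by (simp add: inverse_eq_divide)
qed

lemma P4:
  fixes A :: "'a set"
  assumes ti: "top_independent A" and w: "weak_topology_on (span A)"
  shows "ZC A"
  unfolding ZC_def
proof (intro allI impI)
  fix W :: "'a set" assume W: "open W \<and> 0 \<in> W"
  obtain \<Phi> \<delta> where P: "finite \<Phi>" "\<Phi> \<subseteq> cont_lin_functionals (span A)" "\<delta> > 0"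
      "\<forall>y\<in>span A. (\<forall>g\<in>\<Phi>. \<bar>g y\<bar> < \<delta>) \<longrightarrow> y \<in> W"
    using weak_nbhd0[OF w conjunct1[OF W] conjunct2[OF W]] by (elim exE conjE) (rule that)
  define F where "F = (\<Union>g\<in>\<Phi>. {a\<in>A. g a \<noteq> 0})"
  have Ff: "finite F" unfolding F_def using P(1) fin_supp[OF ti w] P(2) by blast
  have FA: "F \<subseteq> A" unfolding F_def by auto
  have "zspan (A - F) \<subseteq> W"
  proof
    fix x assume "x \<in> zspan (A - F)"
    then obtain G m where G: "x = (\<Sum>b\<in>G. of_int (m b) *\<^sub>R b)" "finite G" "G \<subseteq> A - F"
      unfolding zspan_def by blast
    have GX: "G \<subseteq> span A" using G(3) span_base by blast
    have xX: "x \<in> span A" unfolding G(1) using GX by (intro span_sum span_scale) auto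
    have "\<forall>g\<in>\<Phi>. \<bar>g x\<bar> < \<delta>"
    proof
      fix g assume g: "g \<in> \<Phi>"
      have gl: "linear_on (span A) g" using g P(2) unfolding cont_lin_functionals_def by auto
      have "g x = (\<Sum>b\<in>G. of_int (m b) * g b)" unfolding G(1) by (rule lin_sum[OF gl G(2) GX])
      also have "\<dots> = 0"
      proof (rule sum.neutral, rule ballI)
        fix b assume "b \<in> G"
        then have "b \<in> A" "b \<notin> F" using G(3) by auto
        then have "g b = 0" using g unfolding F_def by auto
        then show "of_int (m b) * g b = 0" by simp
      qed
      finally show "\<bar>g x\<bar> < \<delta>" using P(3) by simp
    qed
    then show "x \<in> W" using P(4) xX by blast
  qed
  then show "\<exists>F. finite F \<and> F \<subseteq> A \<and> zspan (A - F) \<subseteq> W" using Ff FA by blast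
qed

end

theorem theorem2p9:
  fixes A :: "'a::{real_vector,t2_space} set"
  assumes "tvs_ops_continuous TYPE('a)"
    and "top_independent A"
  shows "is_tychonoff_dsum A \<longleftrightarrow> weak_topology_on (span A)"
proof
  assume "is_tychonoff_dsum A"
  then have "ZC A" by (rule P1)
  then have "SC A" by (rule P2[OF assms(1)])
  then show "weak_topology_on (span A)" by (rule P3[OF assms(1,2)])
next
  assume "weak_topology_on (span A)"
  then have "ZC A" by (rule P4[OF assms(1,2)])
  then show "is_tychonoff_dsum A" by (rule P5[OF assms(1,2)])
qed

end
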